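(* Assume (A1), (A2) and (A5). Let $V$ be a uniformly random vertex of $G^*(n,\mathbf d)$ and $\mathcal C(V)$ its component. Then there exist $c>0$, $\varepsilon>0$ and $C<\infty$ such that for all $n$, $P(e(\mathcal C(V))=\ell)\le Ce^{-c\ell}$ for $0\le\ell\le\varepsilon n$, and $P(|\mathcal C(V)|=k)\le Ce^{-ck}$ for $1\le k\le\varepsilon n$.
   Context: For each $n\ge1$ a degree sequence $\mathbf d=(d_1,\dots,d_n)$ of non-negative integers is given, with even sum. $G^*(n,\mathbf d)$ is the configuration-model multigraph on $v_1,\dots,v_n$: $v_i$ receives $d_i$ half-edges, a uniformly random perfect matching of all half-edges gives the edges (loops and multiple edges allowed). $n_k:=|\{i:d_i=k\}|$, $D_n$ with $P(D_n=k)=n_k/n$. (A1) there is a probability distribution $(p_k)$ with $n_k/n\to p_k$ for all $k$ and $\mu:=\sum_kkp_k\in(0,\infty)$; $D$ has $P(D=k)=p_k$. (A2) $E D_n\to\mu$. (A5) $E D(D-2)>0$. $e(\cdot)$ and $|\cdot|$ denote numbers of edges and vertices. *)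

theory Defs
  imports "HOL-Probability.Probability"
begin

text \<open>The multigraph G*(n,d) is given by a uniformly random perfect matching.\<close>

definition half_edges :: "nat \<Rightarrow> (nat \<Rightarrow> nat) \<Rightarrow> (nat \<times> nat) set" where
  "half_edges n dn = {(i, j). i < n \<and> j < dn i}"

definition perfect_matchings ::
  "nat \<Rightarrow> (nat \<Rightarrow> nat) \<Rightarrow> ((nat \<times> nat) \<Rightarrow> (nat \<times> nat)) set" where
  "perfect_matchings n dn =
     {m. (\<forall>h \<in> half_edges n dn. m h \<in> half_edges n dn \<and> m h \<noteq> h \<and> m (m h) = h)
         \<and> (\<forall>h. h \<notin> half_edges n dn \<longrightarrow> m h = h)}"

definition config_model :: "nat \<Rightarrow> (nat \<Rightarrow> nat) \<Rightarrow> ((nat \<times> nat) \<Rightarrow> (nat \<times> nat)) pmf" where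
  "config_model n dn = pmf_of_set (perfect_matchings n dn)"

definition cm_edges ::
  "nat \<Rightarrow> (nat \<Rightarrow> nat) \<Rightarrow> ((nat \<times> nat) \<Rightarrow> (nat \<times> nat)) \<Rightarrow> (nat \<times> nat) set set" where
  "cm_edges n dn m = {{h, m h} | h. h \<in> half_edges n dn}"

definition cm_adj :: "nat \<Rightarrow> (nat \<Rightarrow> nat) \<Rightarrow> ((nat \<times> nat) \<Rightarrow> (nat \<times> nat)) \<Rightarrow> (nat \<times> nat) set" where
  "cm_adj n dn m = {(fst h, fst (m h)) | h. h \<in> half_edges n dn}"

definition component :: "nat \<Rightarrow> (nat \<Rightarrow> nat) \<Rightarrow> ((nat \<times> nat) \<Rightarrow> (nat \<times> nat)) \<Rightarrow> nat \<Rightarrow> nat set" where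
  "component n dn m v = {w. (v, w) \<in> (cm_adj n dn m)\<^sup>*}"

definition component_edges ::
  "nat \<Rightarrow> (nat \<Rightarrow> nat) \<Rightarrow> ((nat \<times> nat) \<Rightarrow> (nat \<times> nat)) \<Rightarrow> nat \<Rightarrow> (nat \<times> nat) set set" where
  "component_edges n dn m v = {e \<in> cm_edges n dn m. \<forall>h \<in> e. fst h \<in> component n dn m v}"

definition cm_with_vertex ::
  "nat \<Rightarrow> (nat \<Rightarrow> nat) \<Rightarrow> (((nat \<times> nat) \<Rightarrow> (nat \<times> nat)) \<times> nat) pmf" where
  "cm_with_vertex n dn = pair_pmf (config_model n dn) (pmf_of_set {..<n})"

end

theory Submission
  imports Defs
begin

definition pm :: "'a set \<Rightarrow> ('a \<Rightarrow> 'a) set" where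
  "pm H = {m. (\<forall>h \<in> H. m h \<in> H \<and> m h \<noteq> h \<and> m (m h) = h) \<and> (\<forall>h. h \<notin> H \<longrightarrow> m h = h)}"

lemma perfect_matchings_pm: "perfect_matchings n dn = pm (half_edges n dn)"
  unfolding perfect_matchings_def pm_def by simp

lemma finite_pm: assumes "finite H" shows "finite (pm H)"
proof -
  have "inj_on (\<lambda>m. restrict m H) (pm H)"
  proof (rule inj_onI)
    fix m m' assume "m \<in> pm H" "m' \<in> pm H" "restrict m H = restrict m' H"
    then show "m = m'" unfolding pm_def by (auto simp: fun_eq_iff restrict_def) (metis)
  qed
  moreover have "(\<lambda>m. restrict m H) ` pm H \<subseteq> H \<rightarrow>\<^sub>E H"
    unfolding pm_def by auto
  moreover have "finite (H \<rightarrow>\<^sub>E H)" using assms by (simp add: finite_PiE)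
  ultimately show ?thesis by (meson finite_imageD finite_subset)
qed

definition swp :: "('a \<Rightarrow> 'a) \<Rightarrow> 'a \<Rightarrow> 'a \<Rightarrow> ('a \<Rightarrow> 'a)" where
  "swp m a b = m(a := b, b := a)"

lemma pm_decomp:
  assumes "a \<in> H"
  shows "pm H = (\<Union>b \<in> H - {a}. (\<lambda>m'. swp m' a b) ` pm (H - {a, b}))"
proof
  show "pm H \<subseteq> (\<Union>b \<in> H - {a}. (\<lambda>m'. swp m' a b) ` pm (H - {a, b}))"
  proof
    fix m assume m: "m \<in> pm H"
    define b where "b = m a"
    have b: "b \<in> H - {a}" "m b = a" using m assms unfolding pm_def b_def by auto
    have inv: "\<And>h. h \<in> H \<Longrightarrow> m h \<in> H \<and> m h \<noteq> h \<and> m (m h) = h" using m unfolding pm_def by auto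
    have injm: "\<And>h h'. h \<in> H \<Longrightarrow> h' \<in> H \<Longrightarrow> m h = m h' \<Longrightarrow> h = h'" using inv by metis
    define m' where "m' = m(a := a, b := b)"
    have "m' \<in> pm (H - {a, b})"
      unfolding pm_def m'_def using m b injm unfolding pm_def by auto
    moreover have "m = swp m' a b" unfolding swp_def m'_def using b b_def by (auto simp: fun_eq_iff)
    ultimately show "m \<in> (\<Union>b \<in> H - {a}. (\<lambda>m'. swp m' a b) ` pm (H - {a, b}))"
      using b by blast
  qed
next
  show "(\<Union>b \<in> H - {a}. (\<lambda>m'. swp m' a b) ` pm (H - {a, b})) \<subseteq> pm H"
  proof (rule subsetI)
    fix mm assume "mm \<in> (\<Union>b \<in> H - {a}. (\<lambda>m'. swp m' a b) ` pm (H - {a, b}))"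
    then obtain b m' where b: "b \<in> H" "b \<noteq> a" and m': "m' \<in> pm (H - {a, b})" and mm: "mm = swp m' a b" by blast
    have m'a: "m' a = a" "m' b = b" using m' unfolding pm_def by auto
    have m'H: "\<forall>h \<in> H - {a,b}. m' h \<in> H - {a,b} \<and> m' h \<noteq> h \<and> m' (m' h) = h"
      "\<forall>h. h \<notin> H - {a,b} \<longrightarrow> m' h = h" using m' unfolding pm_def by auto
    show "mm \<in> pm H"
      unfolding pm_def swp_def mm
    proof (intro CollectI conjI ballI allI impI)
      fix h assume h: "h \<in> H"
      show "(m'(a := b, b := a)) h \<in> H" using m'H h b assms by auto
      show "(m'(a := b, b := a)) h \<noteq> h" using m'H h b assms by auto
      show "(m'(a := b, b := a)) ((m'(a := b, b := a)) h) = h" using m'H h b assms by auto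
    next
      fix h assume "h \<notin> H" then show "(m'(a := b, b := a)) h = h" using m'H b assms by auto
    qed
  qed
qed

lemma swp_inj: "inj_on (\<lambda>m'. swp m' a b) (pm (H - {a, b}))"
proof (rule inj_onI)
  fix m1 m2 assume m: "m1 \<in> pm (H - {a, b})" "m2 \<in> pm (H - {a, b})" and e: "swp m1 a b = swp m2 a b"
  have id: "m1 a = a" "m1 b = b" "m2 a = a" "m2 b = b" using m unfolding pm_def by auto
  show "m1 = m2"
  proof
    fix x show "m1 x = m2 x"
    proof (cases "x = a \<or> x = b")
      case True then show ?thesis using id by auto
    next
      case False then show ?thesis using fun_cong[OF e, of x] by (simp add: swp_def)
    qed
  qed
qed

lemma swp_a: "a \<noteq> b \<Longrightarrow> swp m a b a = b" by (simp add: swp_def)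

lemma pm_sum:
  fixes f :: "('a \<Rightarrow> 'a) \<Rightarrow> real"
  assumes "finite H" "a \<in> H"
  shows "sum f (pm H) = (\<Sum>b \<in> H - {a}. \<Sum>m' \<in> pm (H - {a, b}). f (swp m' a b))"
proof -
  have "sum f (pm H) = sum f (\<Union>b \<in> H - {a}. (\<lambda>m'. swp m' a b) ` pm (H - {a, b}))"
    using pm_decomp[OF assms(2)] by simp
  also have "\<dots> = (\<Sum>b \<in> H - {a}. sum f ((\<lambda>m'. swp m' a b) ` pm (H - {a, b})))"
  proof (rule sum.UNION_disjoint)
    show "finite (H - {a})" using assms by simp
    show "\<forall>b\<in>H - {a}. finite ((\<lambda>m'. swp m' a b) ` pm (H - {a, b}))" using assms by (auto intro: finite_pm)
    have d: "swp m1 a i \<noteq> swp m2 a j" if "i \<noteq> j" "i \<noteq> a" "j \<noteq> a" for m1 m2 i j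
      using that swp_a[of a i m1] swp_a[of a j m2] by metis
    show "\<forall>i\<in>H - {a}. \<forall>j\<in>H - {a}. i \<noteq> j \<longrightarrow>
      (\<lambda>m'. swp m' a i) ` pm (H - {a, i}) \<inter> (\<lambda>m'. swp m' a j) ` pm (H - {a, j}) = {}"
      using d by blast
  qed
  also have "\<dots> = (\<Sum>b \<in> H - {a}. \<Sum>m' \<in> pm (H - {a, b}). f (swp m' a b))"
    by (rule sum.cong[OF refl], rule sum.reindex_cong[OF swp_inj]) auto
  finally show ?thesis .
qed

fun pmc :: "nat \<Rightarrow> nat" where
  "pmc 0 = 1" | "pmc (Suc 0) = 0" | "pmc (Suc (Suc k)) = Suc k * pmc k"

lemma pm_empty: "pm {} = {id}"
  unfolding pm_def by (auto simp: fun_eq_iff)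

lemma card_pm: "finite H \<Longrightarrow> card (pm H) = pmc (card H)"
proof (induction "card H" arbitrary: H rule: less_induct)
  case less
  show ?case
  proof (cases "H = {}")
    case True then show ?thesis by (simp add: pm_empty)
  next
    case False
    then obtain a where a: "a \<in> H" by blast
    have "real (card (pm H)) = (\<Sum>b \<in> H - {a}. \<Sum>m' \<in> pm (H - {a, b}). (1::real))"
      using pm_sum[OF less.prems a, of "\<lambda>_. 1"] by simp
    also have "\<dots> = (\<Sum>b \<in> H - {a}. real (pmc (card H - 2)))"
    proof (rule sum.cong[OF refl])
      fix b assume b: "b \<in> H - {a}"
      have c2: "card {a, b} = 2" using b by auto
      have c: "card (H - {a, b}) = card H - 2" using b a less.prems c2
        by (subst card_Diff_subset) auto
      have "card (H - {a, b}) < card H" using b a less.prems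
        by (intro psubset_card_mono) auto
      then have "card (pm (H - {a, b})) = pmc (card (H - {a, b}))"
        using less.hyps[of "H - {a,b}"] less.prems by blast
      then show "(\<Sum>m' \<in> pm (H - {a, b}). (1::real)) = real (pmc (card H - 2))"
        using c by simp
    qed
    also have "\<dots> = real ((card H - 1) * pmc (card H - 2))"
      using a less.prems by simp
    finally have *: "card (pm H) = (card H - 1) * pmc (card H - 2)" by (metis of_nat_eq_iff)
    have "card H \<noteq> 0" using a less.prems by auto
    then obtain j where j: "card H = Suc j" using not0_implies_Suc by blast
    show ?thesis
    proof (cases j)
      case 0 then show ?thesis using * j by simp
    next
      case (Suc i) then show ?thesis using * j by simp
    qed
  qed
qed

lemma pmc_even_pos: "even k \<Longrightarrow> pmc k > 0"
proof (induction k rule: pmc.induct)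
  case 1 then show ?case by simp
next
  case 2 then show ?case by simp
next
  case (3 k) then show ?case by simp
qed

type_synonym he = "nat \<times> nat"

inductive_set reach :: "he set \<Rightarrow> he set \<Rightarrow> (he \<Rightarrow> he) \<Rightarrow> he set" for H A m where
  rbase: "x \<in> A \<Longrightarrow> x \<in> reach H A m"
| rstep: "x \<in> reach H A m \<Longrightarrow> m x \<in> reach H A m"
| rvert: "x \<in> reach H A m \<Longrightarrow> y \<in> H \<Longrightarrow> fst y = fst x \<Longrightarrow> y \<in> reach H A m"

definition matching_on :: "he set \<Rightarrow> (he \<Rightarrow> he) \<Rightarrow> bool" where
  "matching_on H m = (\<forall>x\<in>H. m x \<in> H \<and> m x \<noteq> x \<and> m (m x) = x)"

definition vclosed :: "he set \<Rightarrow> he set \<Rightarrow> bool" where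
  "vclosed H A = (\<forall>x\<in>A. \<forall>y\<in>H. fst y = fst x \<longrightarrow> y \<in> A)"

definition nextA :: "he set \<Rightarrow> he set \<Rightarrow> he \<Rightarrow> he \<Rightarrow> he set" where
  "nextA H A a b = (if b \<in> A then A - {a, b} else (A \<union> {y\<in>H. fst y = fst b}) - {a, b})"

lemma reach_sub:
  assumes "A \<subseteq> H" "matching_on H m"
  shows "reach H A m \<subseteq> H"
proof
  fix x assume "x \<in> reach H A m" then show "x \<in> H"
    by induction (use assms in \<open>auto simp: matching_on_def\<close>)
qed

lemma reach_empty: "reach H {} m = {}"
proof -
  have "x \<notin> reach H {} m" for x
  proof
    assume "x \<in> reach H {} m" then show False by induction auto
  qed
  then show ?thesis by blast
qed

lemma reach_mono_A: "x \<in> reach H A m \<Longrightarrow> A \<subseteq> B \<Longrightarrow> x \<in> reach H B m"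
  by (induction rule: reach.induct) (auto intro: reach.intros)

lemma A_sub_reach: "A \<subseteq> reach H A m"
  by (auto intro: reach.intros)

lemma step_facts:
  assumes mo: "matching_on H m" and AH: "A \<subseteq> H" and vc: "vclosed H A" and a: "a \<in> A"
  defines "b \<equiv> m a"
  shows "a \<noteq> b" "b \<in> H" "m b = a" "matching_on (H - {a, b}) m"
    "nextA H A a b \<subseteq> H - {a, b}" "vclosed (H - {a, b}) (nextA H A a b)"
proof -
  have aH: "a \<in> H" using a AH by auto
  show ab: "a \<noteq> b" "b \<in> H" "m b = a" using mo aH unfolding matching_on_def b_def by metis+
  show "matching_on (H - {a, b}) m" unfolding matching_on_def
  proof
    fix x assume x: "x \<in> H - {a, b}"
    have "m x \<noteq> a" using x mo ab a AH unfolding matching_on_def b_def by (metis DiffD1 DiffD2 insertCI subsetD)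
    moreover have "m x \<noteq> b" using x mo ab a AH unfolding matching_on_def b_def by (metis DiffD1 DiffD2 insertCI subsetD)
    ultimately show "m x \<in> H - {a, b} \<and> m x \<noteq> x \<and> m (m x) = x" using x mo unfolding matching_on_def by auto
  qed
  show "nextA H A a b \<subseteq> H - {a, b}" using AH unfolding nextA_def by auto
  show "vclosed (H - {a, b}) (nextA H A a b)"
    using vc unfolding vclosed_def nextA_def by auto
qed

lemma reach_decomp:
  assumes mo: "matching_on H m" and AH: "A \<subseteq> H" and vc: "vclosed H A" and a: "a \<in> A"
  defines "b \<equiv> m a"
  shows "reach H A m = insert a (insert b (reach (H - {a, b}) (nextA H A a b) m))"
proof -
  note sf = step_facts[OF mo AH vc a, folded b_def]
  let ?H' = "H - {a, b}" and ?A' = "nextA H A a b"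
  let ?R' = "reach ?H' ?A' m"
  have R'H: "?R' \<subseteq> ?H'" using reach_sub[OF sf(5) sf(4)] .
  have "?A' \<subseteq> reach H A m"
  proof
    fix y assume y: "y \<in> ?A'"
    show "y \<in> reach H A m"
    proof (cases "y \<in> A")
      case True then show ?thesis by (rule rbase)
    next
      case False
      then have "b \<notin> A" "y \<in> H" "fst y = fst b" using y unfolding nextA_def by (auto split: if_splits)
      moreover have "b \<in> reach H A m" unfolding b_def by (rule rstep, rule rbase, rule a)
      ultimately show ?thesis by (auto intro: rvert)
    qed
  qed
  have sub1: "x \<in> reach H A m" if "x \<in> ?R'" for x
    using that
  proof induction
    case (rbase x) then show ?case using \<open>?A' \<subseteq> reach H A m\<close> by blast
  next
    case (rstep x) then show ?case by (metis reach.rstep)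
  next
    case (rvert x y) then show ?case by (auto intro: reach.rvert)
  qed
  have ab: "a \<in> reach H A m" "b \<in> reach H A m" unfolding b_def by (auto intro: reach.intros a)
  have sub2: "x \<in> insert a (insert b ?R')" if "x \<in> reach H A m" for x
    using that
  proof induction
    case (rbase x)
    then show ?case
    proof (cases "x = a \<or> x = b")
      case False then have "x \<in> ?A'" using rbase unfolding nextA_def by auto
      then show ?thesis by (auto intro: reach.rbase)
    qed auto
  next
    case (rstep x)
    then show ?case
    proof (elim insertE)
      assume "x = a" then show ?thesis unfolding b_def by simp
    next
      assume "x = b" then show ?thesis using sf(3) by simp
    next
      assume "x \<in> ?R'" then show ?thesis by (auto intro: reach.rstep)
    qed
  next
    case (rvert x y)
    show ?case
    proof (cases "y = a \<or> y = b")
      case True then show ?thesis by auto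
    next
      case False
      then have yH': "y \<in> ?H'" using rvert by auto
      from rvert.IH show ?thesis
      proof (elim insertE)
        assume "x = a"
        then have "y \<in> A" using vc rvert a unfolding vclosed_def by auto
        then have "y \<in> ?A'" using False unfolding nextA_def by auto
        then show ?thesis by (auto intro: reach.rbase)
      next
        assume xb: "x = b"
        have "y \<in> ?A'"
        proof (cases "b \<in> A")
          case True
          then have "y \<in> A" using vc rvert xb unfolding vclosed_def by auto
          then show ?thesis using False True unfolding nextA_def by auto
        next
          case bA: False
          then show ?thesis using False rvert xb unfolding nextA_def by auto
        qed
        then show ?thesis by (auto intro: reach.rbase)
      next
        assume "x \<in> ?R'"
        then show ?thesis using yH' rvert by (auto intro: reach.rvert)
      qed
    qed
  qed
  show ?thesis using sub1 sub2 ab by blast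
qed

lemma vert_decomp:
  assumes mo: "matching_on H m" and AH: "A \<subseteq> H" and vc: "vclosed H A" and a: "a \<in> A"
  defines "b \<equiv> m a"
  shows "b \<in> A \<Longrightarrow> fst ` reach H A m - fst ` A =
            fst ` reach (H - {a, b}) (nextA H A a b) m - fst ` nextA H A a b"
    and "b \<notin> A \<Longrightarrow> fst ` reach H A m - fst ` A =
            insert (fst b) (fst ` reach (H - {a, b}) (nextA H A a b) m - fst ` nextA H A a b)"
    and "b \<notin> A \<Longrightarrow> fst b \<notin> fst ` reach (H - {a, b}) (nextA H A a b) m - fst ` nextA H A a b"
proof -
  note sf = step_facts[OF mo AH vc a, folded b_def]
  let ?H' = "H - {a, b}" and ?A' = "nextA H A a b"
  let ?R' = "reach ?H' ?A' m"
  have R'H: "?R' \<subseteq> ?H'" using reach_sub[OF sf(5) sf(4)] .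
  have R: "reach H A m = insert a (insert b ?R')" using reach_decomp[OF mo AH vc a] b_def by simp
  have vcA: "\<And>y z. y \<in> A \<Longrightarrow> z \<in> H \<Longrightarrow> fst z = fst y \<Longrightarrow> z \<in> A" using vc unfolding vclosed_def by blast
  {
    assume bA: "b \<in> A"
    have A': "?A' = A - {a, b}" using bA unfolding nextA_def by simp
    show "fst ` reach H A m - fst ` A = fst ` ?R' - fst ` ?A'"
    proof
      show "fst ` reach H A m - fst ` A \<subseteq> fst ` ?R' - fst ` ?A'"
      proof
        fix w assume w: "w \<in> fst ` reach H A m - fst ` A"
        then obtain z where z: "z \<in> reach H A m" "w = fst z" by blast
        have "z \<noteq> a" "z \<noteq> b" using w z a bA by auto
        then have "z \<in> ?R'" using z R by blast
        moreover have "w \<notin> fst ` ?A'" using w A' by blast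
        ultimately show "w \<in> fst ` ?R' - fst ` ?A'" using z by blast
      qed
    next
      show "fst ` ?R' - fst ` ?A' \<subseteq> fst ` reach H A m - fst ` A"
      proof
        fix w assume w: "w \<in> fst ` ?R' - fst ` ?A'"
        then obtain z where z: "z \<in> ?R'" "w = fst z" by blast
        have zH: "z \<in> ?H'" using z R'H by blast
        have "w \<notin> fst ` A"
        proof
          assume "w \<in> fst ` A"
          then obtain y where "y \<in> A" "w = fst y" by blast
          then have "z \<in> A" using vcA[of y z] zH z by auto
          then have "z \<in> ?A'" using zH A' by blast
          then show False using w z by blast
        qed
        then show "w \<in> fst ` reach H A m - fst ` A" using z R by blast
      qed
    qed
  }
  {
    assume bA: "b \<notin> A"
    have A': "?A' = (A \<union> {y\<in>H. fst y = fst b}) - {a, b}" using bA unfolding nextA_def by simp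
    have fbA: "fst b \<notin> fst ` A"
    proof
      assume "fst b \<in> fst ` A"
      then obtain y where "y \<in> A" "fst b = fst y" by blast
      then have "b \<in> A" using vcA[of y b] sf(2) by auto
      then show False using bA by blast
    qed
    show "fst b \<notin> fst ` ?R' - fst ` ?A'"
    proof
      assume "fst b \<in> fst ` ?R' - fst ` ?A'"
      then obtain z where z: "z \<in> ?R'" "fst b = fst z" "fst b \<notin> fst ` ?A'" by blast
      have "z \<in> ?H'" using z R'H by blast
      then have "z \<in> ?A'" using A' z by auto
      then show False using z by blast
    qed
    show "fst ` reach H A m - fst ` A = insert (fst b) (fst ` ?R' - fst ` ?A')"
    proof
      show "fst ` reach H A m - fst ` A \<subseteq> insert (fst b) (fst ` ?R' - fst ` ?A')"
      proof
        fix w assume w: "w \<in> fst ` reach H A m - fst ` A"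
        then obtain z where z: "z \<in> reach H A m" "w = fst z" by blast
        show "w \<in> insert (fst b) (fst ` ?R' - fst ` ?A')"
        proof (cases "w = fst b")
          case False
          have "z \<noteq> a" using w z a by auto
          moreover have "z \<noteq> b" using False z by auto
          ultimately have "z \<in> ?R'" using z R by blast
          moreover have "w \<notin> fst ` ?A'" using w A' False by auto
          ultimately show ?thesis using z by blast
        qed simp
      qed
    next
      show "insert (fst b) (fst ` ?R' - fst ` ?A') \<subseteq> fst ` reach H A m - fst ` A"
      proof
        fix w assume w: "w \<in> insert (fst b) (fst ` ?R' - fst ` ?A')"
        show "w \<in> fst ` reach H A m - fst ` A"
        proof (cases "w = fst b")
          case True then show ?thesis using fbA R by auto
        next
          case False
          then have w': "w \<in> fst ` ?R' - fst ` ?A'" using w by blast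
          then obtain z where z: "z \<in> ?R'" "w = fst z" by blast
          have zH: "z \<in> ?H'" using z R'H by blast
          have "w \<notin> fst ` A"
          proof
            assume "w \<in> fst ` A"
            then obtain y where "y \<in> A" "w = fst y" by blast
            then have "z \<in> A" using vcA[of y z] zH z by auto
            then have "z \<in> ?A'" using zH A' by blast
            then show False using w' z by blast
          qed
          then show ?thesis using z R by blast
        qed
      qed
    qed
  }
qed

fun Zf :: "real \<Rightarrow> real \<Rightarrow> nat \<Rightarrow> nat \<Rightarrow> he set \<Rightarrow> he set \<Rightarrow> (he \<Rightarrow> he) \<Rightarrow> real" where
  "Zf g w 0 db H A m = (if A = {} then 1 else 0)"
| "Zf g w (Suc t) db H A m = (if A = {} then 1 else
    (let a = (SOME a. a \<in> A); b = m a in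
     if b \<in> A then g * Zf g w t db (H - {a, b}) (nextA H A a b) m
     else if db = 0 then 0
     else w * Zf g w t (db - 1) (H - {a, b}) (nextA H A a b) m))"

lemma Zf_eval:
  assumes "finite H" "matching_on H m" "A \<subseteq> H" "vclosed H A"
    "card (reach H A m) \<le> 2 * t" "card (fst ` reach H A m - fst ` A) \<le> db"
  shows "Zf g w t db H A m = g ^ (card (reach H A m) div 2 - card (fst ` reach H A m - fst ` A))
           * w ^ card (fst ` reach H A m - fst ` A)
         \<and> even (card (reach H A m))
         \<and> card (fst ` reach H A m - fst ` A) \<le> card (reach H A m) div 2"
  using assms
proof (induction t arbitrary: db H A)
  case 0
  have "finite (reach H A m)" using reach_sub[OF 0(3) 0(2)] 0(1) finite_subset by blast
  then have "reach H A m = {}" using 0 by simp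
  then have "A = {}" using A_sub_reach[of A H m] by blast
  then show ?case by (simp add: reach_empty)
next
  case (Suc t)
  show ?case
  proof (cases "A = {}")
    case True then show ?thesis by (simp add: reach_empty)
  next
    case False
    define a where "a = (SOME a. a \<in> A)"
    have a: "a \<in> A" unfolding a_def using False by (simp add: some_in_eq)
    define b where "b = m a"
    note sf = step_facts[OF Suc.prems(2,3,4) a, folded b_def]
    let ?H' = "H - {a, b}" and ?A' = "nextA H A a b"
    let ?R' = "reach ?H' ?A' m"
    have R'H: "?R' \<subseteq> ?H'" using reach_sub[OF sf(5) sf(4)] .
    have R: "reach H A m = insert a (insert b ?R')" using reach_decomp[OF Suc.prems(2,3,4) a] b_def by simp
    have finR': "finite ?R'" using R'H Suc.prems(1) finite_subset by blast
    have aR': "a \<notin> ?R'" "b \<notin> ?R'" using R'H by auto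
    have cR: "card (reach H A m) = card ?R' + 2" using R aR' sf(1) finR' by simp
    have cR': "card ?R' \<le> 2 * t" using cR Suc.prems(5) by simp
    have finF: "finite (fst ` ?R' - fst ` ?A')" using finR' by blast
    show ?thesis
    proof (cases "b \<in> A")
      case True
      have V: "fst ` reach H A m - fst ` A = fst ` ?R' - fst ` ?A'"
        using vert_decomp(1)[OF Suc.prems(2,3,4) a] True b_def by simp
      have IH: "Zf g w t db ?H' ?A' m = g ^ (card ?R' div 2 - card (fst ` ?R' - fst ` ?A'))
           * w ^ card (fst ` ?R' - fst ` ?A') \<and> even (card ?R')
         \<and> card (fst ` ?R' - fst ` ?A') \<le> card ?R' div 2"
        using Suc.IH[of ?H' ?A' db] Suc.prems(1,6) sf(4,5,6) cR' V by auto
      have Z: "Zf g w (Suc t) db H A m = g * Zf g w t db ?H' ?A' m"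
        using False True by (simp add: a_def[symmetric] b_def[symmetric] Let_def)
      have e: "card (reach H A m) div 2 - card (fst ` ?R' - fst ` ?A') =
            Suc (card ?R' div 2 - card (fst ` ?R' - fst ` ?A'))"
        using IH cR by auto
      show ?thesis unfolding Z V using IH cR e by auto
    next
      case bA: False
      have V: "fst ` reach H A m - fst ` A = insert (fst b) (fst ` ?R' - fst ` ?A')"
        using vert_decomp(2)[OF Suc.prems(2,3,4) a] bA b_def by simp
      have nb: "fst b \<notin> fst ` ?R' - fst ` ?A'"
        using vert_decomp(3)[OF Suc.prems(2,3,4) a] bA b_def by simp
      have cV: "card (fst ` reach H A m - fst ` A) = Suc (card (fst ` ?R' - fst ` ?A'))"
        unfolding V using nb finF by simp
      have db: "db \<noteq> 0" "card (fst ` ?R' - fst ` ?A') \<le> db - 1" using cV Suc.prems(6) by auto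
      have IH: "Zf g w t (db - 1) ?H' ?A' m = g ^ (card ?R' div 2 - card (fst ` ?R' - fst ` ?A'))
           * w ^ card (fst ` ?R' - fst ` ?A') \<and> even (card ?R')
         \<and> card (fst ` ?R' - fst ` ?A') \<le> card ?R' div 2"
        using Suc.IH[of ?H' ?A' "db - 1"] Suc.prems(1) sf(4,5,6) cR' db(2) by auto
      have Z: "Zf g w (Suc t) db H A m = w * Zf g w t (db - 1) ?H' ?A' m"
        using False bA db(1) by (simp add: a_def[symmetric] b_def[symmetric] Let_def)
      have e: "card (reach H A m) div 2 - card (fst ` reach H A m - fst ` A) =
            card ?R' div 2 - card (fst ` ?R' - fst ` ?A')"
        using IH cR cV by auto
      show ?thesis unfolding Z e unfolding cV using IH cR by auto
    qed
  qed
qed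

lemma Zf_cong:
  assumes "A \<subseteq> H" "\<forall>x\<in>H. m x = m' x"
  shows "Zf g w t db H A m = Zf g w t db H A m'"
  using assms
proof (induction t arbitrary: db H A)
  case 0 then show ?case by simp
next
  case (Suc t)
  show ?case
  proof (cases "A = {}")
    case True then show ?thesis by simp
  next
    case False
    define a where "a = (SOME a. a \<in> A)"
    have a: "a \<in> A" unfolding a_def using False by (simp add: some_in_eq)
    have mm: "m a = m' a" using a Suc.prems by auto
    define b where "b = m a"
    have sub: "nextA H A a b \<subseteq> H - {a, b}" using Suc.prems(1) unfolding nextA_def by auto
    have ag: "\<forall>x\<in>H - {a, b}. m x = m' x" using Suc.prems(2) by auto
    have e1: "Zf g w t db (H - {a, b}) (nextA H A a b) m = Zf g w t db (H - {a, b}) (nextA H A a b) m'"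
      by (rule Suc.IH[OF sub ag])
    have e2: "Zf g w t (db - 1) (H - {a, b}) (nextA H A a b) m = Zf g w t (db - 1) (H - {a, b}) (nextA H A a b) m'"
      by (rule Suc.IH[OF sub ag])
    show ?thesis using False e1 e2 mm
      by (simp add: a_def[symmetric] b_def[symmetric] Let_def)
  qed
qed

lemma Zf_nonneg: "g \<ge> 0 \<Longrightarrow> w \<ge> 0 \<Longrightarrow> Zf g w t db H A m \<ge> 0"
  by (induction t arbitrary: db H A) (auto simp: Let_def)

lemma swp_agree: "\<forall>x\<in>H - {a, b}. swp m' a b x = m' x"
  by (auto simp: swp_def)

lemma swp_matching: "m' \<in> pm (H - {a, b}) \<Longrightarrow> b \<in> H \<Longrightarrow> a \<in> H \<Longrightarrow> a \<noteq> b \<Longrightarrow> matching_on H (swp m' a b)"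
  using pm_decomp[of a H] unfolding pm_def matching_on_def by blast

lemma Zf_super:
  fixes H0 :: "he set" and x g w Kmax :: real and kz :: nat
  assumes finH0: "finite H0" and g: "g \<ge> 0" and w: "w \<ge> 0" and x: "0 < x" "x \<le> 1"
    and top: "\<And>S. finite S \<Longrightarrow> card S \<le> kz \<Longrightarrow> real (card {y\<in>H0. fst y \<in> S}) \<le> Kmax"
    and cond: "g * Kmax / x^2 + w * (\<Sum>y\<in>H0. x ^ card {z\<in>H0. fst z = fst y}) / x^2
                 \<le> real (card H0) - Kmax - 1"
  shows "H \<subseteq> H0 \<Longrightarrow> even (card H) \<Longrightarrow> A \<subseteq> H \<Longrightarrow> vclosed H A
    \<Longrightarrow> (\<forall>b\<in>H - A. {y\<in>H. fst y = fst b} = {y\<in>H0. fst y = fst b})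
    \<Longrightarrow> finite S \<Longrightarrow> (H0 - H) \<union> A \<subseteq> {y\<in>H0. fst y \<in> S} \<Longrightarrow> card S + db \<le> kz
    \<Longrightarrow> (\<Sum>m\<in>pm H. Zf g w t db H A m) \<le> x ^ card A * real (card (pm H))"
proof (induction t arbitrary: db H A S)
  case 0
  have "(\<Sum>m\<in>pm H. Zf g w 0 db H A m) \<le> (\<Sum>m\<in>pm H. x ^ card A)"
    by (rule sum_mono) (use x in auto)
  then show ?case using x by (simp add: mult.commute)
next
  case (Suc t)
  note HH0 = Suc.prems(1) and evH = Suc.prems(2) and AH = Suc.prems(3) and vc = Suc.prems(4)
    and full = Suc.prems(5) and finS = Suc.prems(6) and cov = Suc.prems(7) and cS = Suc.prems(8)
  have finH: "finite H" using HH0 finH0 finite_subset by blast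
  show ?case
  proof (cases "A = {}")
    case True then show ?thesis by simp
  next
    case False
    define a where "a = (SOME a. a \<in> A)"
    have a: "a \<in> A" unfolding a_def using False by (simp add: some_in_eq)
    have aH: "a \<in> H" using a AH by auto
    have vcA: "\<And>y z. y \<in> A \<Longrightarrow> z \<in> H \<Longrightarrow> fst z = fst y \<Longrightarrow> z \<in> A"
      using vc unfolding vclosed_def by blast
    define d where "d = (\<lambda>b::he. card {z\<in>H0. fst z = fst b})"
    define P where "P = real (pmc (card H - 2))"
    have P0: "P \<ge> 0" unfolding P_def by simp
    have cardA: "real (card A) \<le> Kmax"
    proof -
      have "card A \<le> card {y\<in>H0. fst y \<in> S}"
        by (rule card_mono) (use finH0 cov in auto)
      then show ?thesis using top[OF finS] cS by (meson add_leE of_nat_le_iff order_trans)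
    qed
    have cardH: "real (card H) \<ge> real (card H0) - Kmax"
    proof -
      have "card (H0 - H) \<le> card {y\<in>H0. fst y \<in> S}"
        by (rule card_mono) (use finH0 cov in auto)
      then have "real (card (H0 - H)) \<le> Kmax" using top[OF finS] cS by (meson add_leE of_nat_le_iff order_trans)
      moreover have "card (H0 - H) = card H0 - card H" using HH0 finH by (simp add: card_Diff_subset)
      moreover have "card H \<le> card H0" using HH0 finH0 by (simp add: card_mono)
      ultimately show ?thesis by linarith
    qed
    define B where "B = (\<lambda>b. (if b \<in> A then g * x ^ card A / x^2 else w * x ^ card A * x ^ d b / x^2) * P)"
    have step: "(\<Sum>m'\<in>pm (H - {a, b}). Zf g w (Suc t) db H A (swp m' a b)) \<le> B b"
      if b: "b \<in> H - {a}" for b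
    proof -
      have ab: "a \<noteq> b" "b \<in> H" using b by auto
      let ?H' = "H - {a, b}" and ?A' = "nextA H A a b"
      have cpm: "card (pm ?H') = pmc (card H - 2)"
      proof -
        have "card {a, b} = 2" using ab by auto
        then have "card ?H' = card H - 2" using ab aH finH by (subst card_Diff_subset) auto
        then show ?thesis using card_pm[of ?H'] finH by simp
      qed
      have swa: "swp m' a b a = b" for m' using ab by (simp add: swp_a)
      have Zeq: "Zf g w (Suc t) db H A (swp m' a b) =
          (if b \<in> A then g * Zf g w t db ?H' ?A' m'
           else if db = 0 then 0 else w * Zf g w t (db - 1) ?H' ?A' m')" for m'
      proof -
        have sub: "?A' \<subseteq> ?H'" using AH unfolding nextA_def by auto
        have c1: "Zf g w t db ?H' ?A' (swp m' a b) = Zf g w t db ?H' ?A' m'"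
          by (rule Zf_cong[OF sub swp_agree])
        have c2: "Zf g w t (db - 1) ?H' ?A' (swp m' a b) = Zf g w t (db - 1) ?H' ?A' m'"
          by (rule Zf_cong[OF sub swp_agree])
        show ?thesis using False c1 c2 swa by (simp add: a_def[symmetric] Let_def)
      qed
      have evH': "even (card ?H')"
      proof -
        have "card {a, b} = 2" using ab by auto
        then have "card ?H' = card H - 2" using ab aH finH by (subst card_Diff_subset) auto
        then show ?thesis using evH by simp
      qed
      show ?thesis
      proof (cases "b \<in> A")
        case True
        have A': "?A' = A - {a, b}" using True unfolding nextA_def by simp
        have IH: "(\<Sum>m'\<in>pm ?H'. Zf g w t db ?H' ?A' m') \<le> x ^ card ?A' * real (card (pm ?H'))"
        proof (rule Suc.IH[of ?H' ?A' S db])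
          show "?H' \<subseteq> H0" using HH0 by auto
          show "even (card ?H')" by (rule evH')
          show "?A' \<subseteq> ?H'" using AH A' by auto
          show "vclosed ?H' ?A'" using vc A' unfolding vclosed_def by auto
          show "\<forall>b'\<in>?H' - ?A'. {y \<in> ?H'. fst y = fst b'} = {y \<in> H0. fst y = fst b'}"
          proof
            fix b' assume b': "b' \<in> ?H' - ?A'"
            then have b'A: "b' \<notin> A" "b' \<in> H" using A' by auto
            have "fst a \<noteq> fst b'" using vcA[OF a b'A(2)] b'A by auto
            moreover have "fst b \<noteq> fst b'" using vcA[OF True b'A(2)] b'A by auto
            ultimately have "{y \<in> ?H'. fst y = fst b'} = {y \<in> H. fst y = fst b'}" by auto
            then show "{y \<in> ?H'. fst y = fst b'} = {y \<in> H0. fst y = fst b'}" using full b'A by auto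
          qed
          show "finite S" by (rule finS)
          show "(H0 - ?H') \<union> ?A' \<subseteq> {y\<in>H0. fst y \<in> S}" using cov a True A' by auto
          show "card S + db \<le> kz" by (rule cS)
        qed
        have cA': "card ?A' = card A - 2" using A' a True ab finH AH
          by (subst A', subst card_Diff_subset) (auto intro: finite_subset)
        have cA2: "card A \<ge> 2"
        proof -
          have "{a, b} \<subseteq> A" using a True by auto
          then have "card {a, b} \<le> card A" using finH AH by (intro card_mono) (auto intro: finite_subset)
          then show ?thesis using ab by auto
        qed
        have xp: "x ^ card ?A' = x ^ card A / x^2"
        proof -
          have "x ^ card A = x ^ card ?A' * x^2" unfolding cA' using cA2 by (metis le_add_diff_inverse2 power_add)
          then show ?thesis using x by simp
        qed
        have "(\<Sum>m'\<in>pm ?H'. Zf g w (Suc t) db H A (swp m' a b)) = g * (\<Sum>m'\<in>pm ?H'. Zf g w t db ?H' ?A' m')"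
          using True by (simp del: Zf.simps add: Zeq sum_distrib_left)
        also have "\<dots> \<le> g * (x ^ card ?A' * real (card (pm ?H')))"
          by (rule mult_left_mono[OF IH g])
        also have "\<dots> = B b" unfolding B_def P_def using True xp cpm by simp
        finally show ?thesis .
      next
        case bA: False
        show ?thesis
        proof (cases "db = 0")
          case True
          have z0: "Zf g w (Suc t) db H A (swp m' a b) = 0" for m'
          proof -
            have "Zf g w (Suc t) db H A (swp m' a b) = (if b \<in> A then g * Zf g w t db ?H' ?A' m'
              else if db = 0 then 0 else w * Zf g w t (db - 1) ?H' ?A' m')" by (rule Zeq)
            also have "\<dots> = 0" using bA True by simp
            finally show ?thesis .
          qed
          have "(\<Sum>m'\<in>pm ?H'. Zf g w (Suc t) db H A (swp m' a b)) = 0"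
            by (simp only: z0 sum.neutral_const)
          also have "0 \<le> B b" unfolding B_def using bA w x P0 by simp
          finally show ?thesis .
        next
          case db0: False
          define vb where "vb = {y\<in>H. fst y = fst b}"
          have A': "?A' = (A \<union> vb) - {a, b}" using bA unfolding nextA_def vb_def by simp
          have vbA: "A \<inter> vb = {}"
          proof (rule ccontr)
            assume "A \<inter> vb \<noteq> {}"
            then obtain y where "y \<in> A" "y \<in> vb" by blast
            then have "y \<in> A" "fst b = fst y" unfolding vb_def by auto
            then have "b \<in> A" using vcA[of y b] ab by simp
            then show False using bA by simp
          qed
          have bvb: "b \<in> vb" using ab unfolding vb_def by simp
          have avb: "a \<notin> vb" using vbA a by auto
          have "vb = {y\<in>H0. fst y = fst b}" unfolding vb_def using full ab bA by blast
          then have vbd: "card vb = d b" unfolding d_def by simp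
          have finA: "finite A" by (rule finite_subset[OF AH finH])
          have finvb: "finite vb" using finH unfolding vb_def by simp
          have A'': "?A' = (A - {a}) \<union> (vb - {b})" unfolding A' using vbA avb bA bvb a by blast
          have cA': "card ?A' = (card A - 1) + (card vb - 1)"
          proof -
            have 1: "card ?A' = card (A - {a}) + card (vb - {b})"
              unfolding A'' by (rule card_Un_disjoint) (use finA finvb vbA in auto)
            have 2: "card (A - {a}) = card A - 1" using a finA by (simp add: card_Diff_singleton)
            have 3: "card (vb - {b}) = card vb - 1" using bvb finvb by (simp add: card_Diff_singleton)
            show ?thesis using 1 2 3 by linarith
          qed
          have cA1: "card A > 0" using a finA by (auto simp: card_gt_0_iff)
          have cvb1: "card vb > 0" using bvb finvb by (auto simp: card_gt_0_iff)
          have xp: "x ^ card ?A' = x ^ card A * x ^ d b / x^2"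
          proof -
            define i where "i = card A - 1"
            define j where "j = card vb - 1"
            have ij: "card A = Suc i" "card vb = Suc j" using cA1 cvb1 unfolding i_def j_def by auto
            have "x ^ card A * x ^ d b = x ^ card ?A' * x^2" unfolding cA' vbd[symmetric] ij
              by (simp add: power_add power2_eq_square)
            then show ?thesis using x by simp
          qed
          have IH: "(\<Sum>m'\<in>pm ?H'. Zf g w t (db - 1) ?H' ?A' m') \<le> x ^ card ?A' * real (card (pm ?H'))"
          proof (rule Suc.IH[of ?H' ?A' "insert (fst b) S" "db - 1"])
            show "?H' \<subseteq> H0" using HH0 by auto
            show "even (card ?H')" by (rule evH')
            show "?A' \<subseteq> ?H'" using AH A' unfolding vb_def by blast
            show "vclosed ?H' ?A'" unfolding vclosed_def
            proof (intro ballI impI)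
              fix u y assume u: "u \<in> ?A'" and y: "y \<in> ?H'" and f: "fst y = fst u"
              show "y \<in> ?A'"
              proof (cases "u \<in> A")
                case True then have "y \<in> A" using vcA[of u y] y f by blast
                then show ?thesis using y A' by blast
              next
                case False then have "fst u = fst b" using u A' unfolding vb_def by blast
                then have "y \<in> vb" using y f unfolding vb_def by simp
                then show ?thesis using y A' by blast
              qed
            qed
            show "\<forall>b'\<in>?H' - ?A'. {y \<in> ?H'. fst y = fst b'} = {y \<in> H0. fst y = fst b'}"
            proof
              fix b' assume b': "b' \<in> ?H' - ?A'"
              then have b'A: "b' \<notin> A" "b' \<in> H" using A' by blast+
              have "fst a \<noteq> fst b'" using vcA[OF a b'A(2)] b'A by auto
              moreover have "fst b \<noteq> fst b'"
              proof
                assume "fst b = fst b'"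
                then have "b' \<in> vb" using b'A unfolding vb_def by simp
                then show False using b' A' by blast
              qed
              ultimately have "{y \<in> ?H'. fst y = fst b'} = {y \<in> H. fst y = fst b'}" by auto
              then show "{y \<in> ?H'. fst y = fst b'} = {y \<in> H0. fst y = fst b'}" using full b'A by auto
            qed
            show "finite (insert (fst b) S)" using finS by simp
            show "(H0 - ?H') \<union> ?A' \<subseteq> {y\<in>H0. fst y \<in> insert (fst b) S}"
              using cov a A' ab HH0 unfolding vb_def by auto
            show "card (insert (fst b) S) + (db - 1) \<le> kz"
              using cS db0 finS by (auto simp: card_insert_if)
          qed
          have "(\<Sum>m'\<in>pm ?H'. Zf g w (Suc t) db H A (swp m' a b)) = w * (\<Sum>m'\<in>pm ?H'. Zf g w t (db - 1) ?H' ?A' m')"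
            using bA db0 by (simp del: Zf.simps add: Zeq sum_distrib_left)
          also have "\<dots> \<le> w * (x ^ card ?A' * real (card (pm ?H')))"
            by (rule mult_left_mono[OF IH w])
          also have "\<dots> = B b" unfolding B_def P_def using bA xp cpm by simp
          finally show ?thesis .
        qed
      qed
    qed
    have "(\<Sum>m\<in>pm H. Zf g w (Suc t) db H A m) = (\<Sum>b\<in>H - {a}. \<Sum>m'\<in>pm (H - {a, b}). Zf g w (Suc t) db H A (swp m' a b))"
      by (rule pm_sum[OF finH aH])
    also have "\<dots> \<le> (\<Sum>b\<in>H - {a}. B b)" by (rule sum_mono) (rule step)
    also have "\<dots> \<le> x ^ card A * real (card (pm H))"
    proof -
      have split: "H - {a} = (A - {a}) \<union> (H - A)" using AH a by auto
      have finA: "finite A" by (rule finite_subset[OF AH finH])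
      have s1: "(\<Sum>b\<in>A - {a}. B b) = real (card A - 1) * (g * x ^ card A / x^2 * P)"
        unfolding B_def using a finA by (simp add: card_Diff_subset)
      have s2: "(\<Sum>b\<in>H - A. B b) = w * x ^ card A / x^2 * P * (\<Sum>b\<in>H - A. x ^ d b)"
        unfolding B_def by (simp add: sum_distrib_left sum_distrib_right sum_divide_distrib mult_ac)
      have s3: "(\<Sum>b\<in>H - A. x ^ d b) \<le> (\<Sum>y\<in>H0. x ^ card {z\<in>H0. fst z = fst y})"
        unfolding d_def by (rule sum_mono2) (use finH0 HH0 x in auto)
      have sumB: "(\<Sum>b\<in>H - {a}. B b) = (\<Sum>b\<in>A - {a}. B b) + (\<Sum>b\<in>H - A. B b)"
        unfolding split by (rule sum.union_disjoint) (use finH finA in auto)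
      define X where "X = x ^ card A * P"
      have X0: "X \<ge> 0" unfolding X_def using x P0 by simp
      have cA1: "card A \<ge> 1" using a finA by (auto simp: Suc_le_eq card_gt_0_iff)
      have "(\<Sum>b\<in>H - {a}. B b) \<le> X * (real (card A - 1) * g / x^2 + w * (\<Sum>y\<in>H0. x ^ card {z\<in>H0. fst z = fst y}) / x^2)"
      proof -
        have "(\<Sum>b\<in>H - {a}. B b) = X * (real (card A - 1) * g / x^2 + w / x^2 * (\<Sum>b\<in>H - A. x ^ d b))"
          unfolding sumB s1 s2 X_def by (simp add: algebra_simps)
        also have "\<dots> \<le> X * (real (card A - 1) * g / x^2 + w / x^2 * (\<Sum>y\<in>H0. x ^ card {z\<in>H0. fst z = fst y}))"
          by (intro mult_left_mono add_left_mono X0 s3) (use w x in simp)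
        finally show ?thesis by simp
      qed
      also have "\<dots> \<le> X * (real (card H) - 1)"
      proof (rule mult_left_mono[OF _ X0])
        have "real (card A - 1) * g / x^2 \<le> Kmax * g / x^2"
          using cardA cA1 g x by (intro divide_right_mono mult_right_mono) auto
        then show "real (card A - 1) * g / x^2 + w * (\<Sum>y\<in>H0. x ^ card {z\<in>H0. fst z = fst y}) / x^2 \<le> real (card H) - 1"
          using cond cardH by (simp add: mult.commute)
      qed
      also have "\<dots> = x ^ card A * real (card (pm H))"
      proof -
        have "card H \<ge> 2"
        proof -
          have "card H \<noteq> 0" using aH finH by auto
          moreover obtain j where "card H = 2 * j" using evH by (elim evenE)
          ultimately show ?thesis by simp
        qed
        then obtain k where k: "card H = Suc (Suc k)" by (metis add_2_eq_Suc le_Suc_ex)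
        have "card (pm H) = Suc k * pmc k" using card_pm[OF finH] k by simp
        then show ?thesis unfolding X_def P_def using k by (simp add: algebra_simps)
      qed
      finally show ?thesis .
    qed
    finally show ?thesis .
  qed
qed

lemma half_edges_Sigma: "half_edges n dn = Sigma {..<n} (\<lambda>i. {..<dn i})"
  unfolding half_edges_def by auto

lemma half_edges_finite: "finite (half_edges n dn)"
  unfolding half_edges_Sigma by auto

lemma card_half_edges: "card (half_edges n dn) = (\<Sum>i<n. dn i)"
  unfolding half_edges_Sigma by (simp add: card_SigmaI)

lemma card_vertex_he: "card {y \<in> half_edges n dn. fst y \<in> S} = (\<Sum>i\<in>S \<inter> {..<n}. dn i)"
proof -
  have "{y \<in> half_edges n dn. fst y \<in> S} = Sigma (S \<inter> {..<n}) (\<lambda>i. {..<dn i})"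
    unfolding half_edges_def by auto
  then show ?thesis by (simp add: card_SigmaI)
qed

lemma card_vertex_he1: "card {y \<in> half_edges n dn. fst y = v} = (if v < n then dn v else 0)"
proof (cases "v < n")
  case True
  then have "{y \<in> half_edges n dn. fst y = v} = {v} \<times> {..<dn v}" unfolding half_edges_def by auto
  then show ?thesis using True by (simp add: card_cartesian_product)
next
  case False
  then have e: "{y \<in> half_edges n dn. fst y = v} = {}" unfolding half_edges_def by auto
  show ?thesis unfolding e using False by simp
qed

lemma cm_with_vertex_eq:
  assumes "perfect_matchings n dn \<noteq> {}" "finite (perfect_matchings n dn)" "n \<ge> 1"
  shows "cm_with_vertex n dn = pmf_of_set (perfect_matchings n dn \<times> {..<n})"
proof (rule pmf_eqI)
  fix z :: "(he \<Rightarrow> he) \<times> nat"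
  obtain m v where z: "z = (m, v)" by (cases z)
  have ne: "{..<n} \<noteq> {}" using assms by (auto simp: lessThan_empty_iff)
  show "pmf (cm_with_vertex n dn) z = pmf (pmf_of_set (perfect_matchings n dn \<times> {..<n})) z"
    unfolding cm_with_vertex_def config_model_def z pmf_pair
    using assms ne by (simp add: indicator_def card_cartesian_product)
qed

lemma prob_cm:
  assumes "perfect_matchings n dn \<noteq> {}" "finite (perfect_matchings n dn)" "n \<ge> 1"
  shows "measure_pmf.prob (cm_with_vertex n dn) {(m, v). Q m v} =
         (\<Sum>v<n. real (card {m \<in> perfect_matchings n dn. Q m v})) / (real (card (perfect_matchings n dn)) * real n)"
proof -
  let ?M = "perfect_matchings n dn"
  have ne: "?M \<times> {..<n} \<noteq> {}" using assms by (auto simp: lessThan_empty_iff)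
  have fin: "finite (?M \<times> {..<n})" using assms by auto
  have eq: "(?M \<times> {..<n}) \<inter> {(m, v). Q m v} = (\<Union>v\<in>{..<n}. {m \<in> ?M. Q m v} \<times> {v})" by auto
  have "card ((?M \<times> {..<n}) \<inter> {(m, v). Q m v}) = (\<Sum>v<n. card ({m \<in> ?M. Q m v} \<times> {v}))"
    unfolding eq by (rule card_UN_disjoint) (use assms in auto)
  also have "\<dots> = (\<Sum>v<n. card {m \<in> ?M. Q m v})" by (simp add: card_cartesian_product)
  finally have c: "card ((?M \<times> {..<n}) \<inter> {(m, v). Q m v}) = (\<Sum>v<n. card {m \<in> ?M. Q m v})" .
  show ?thesis
    unfolding cm_with_vertex_eq[OF assms] measure_pmf_of_set[OF ne fin] c
    by (simp add: card_cartesian_product)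
qed

lemma comp_eq:
  fixes v :: nat
  assumes m: "m \<in> pm (half_edges n dn)"
  defines "H0 \<equiv> half_edges n dn"
  defines "A0 \<equiv> {y \<in> H0. fst y = v}"
  shows "component n dn m v = insert v (fst ` reach H0 A0 m)"
proof -
  have mo: "matching_on H0 m" using m unfolding pm_def matching_on_def H0_def by auto
  have RH: "reach H0 A0 m \<subseteq> H0" by (rule reach_sub) (use mo in \<open>auto simp: A0_def\<close>)
  have adj: "cm_adj n dn m = {(fst h, fst (m h)) | h. h \<in> H0}" unfolding cm_adj_def H0_def by simp
  show ?thesis
  proof
    show "component n dn m v \<subseteq> insert v (fst ` reach H0 A0 m)"
    proof
      fix u assume "u \<in> component n dn m v"
      then have "(v, u) \<in> (cm_adj n dn m)\<^sup>*" unfolding component_def by simp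
      then show "u \<in> insert v (fst ` reach H0 A0 m)"
      proof (induction rule: rtrancl_induct)
        case base then show ?case by simp
      next
        case (step u w)
        obtain h where h: "h \<in> H0" "u = fst h" "w = fst (m h)" using step(2) unfolding adj by blast
        have "h \<in> reach H0 A0 m"
        proof (cases "u = v")
          case True then show ?thesis using h by (auto simp: A0_def intro: rbase)
        next
          case False
          then obtain z where z: "z \<in> reach H0 A0 m" "u = fst z" using step(3) by auto
          then show ?thesis using h rvert[OF z(1), of h] by simp
        qed
        then have "m h \<in> reach H0 A0 m" by (rule rstep)
        then show ?case using h by auto
      qed
    qed
  next
    have "(v, fst z) \<in> (cm_adj n dn m)\<^sup>*" if "z \<in> reach H0 A0 m" for z
      using that
    proof induction
      case (rbase x) then show ?case by (simp add: A0_def)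
    next
      case (rstep x)
      have "x \<in> H0" using rstep(1) RH by auto
      then have "(fst x, fst (m x)) \<in> cm_adj n dn m" unfolding adj by blast
      then show ?case using rstep(2) by (rule rtrancl_into_rtrancl[rotated])
    next
      case (rvert x y) then show ?case by simp
    qed
    then show "insert v (fst ` reach H0 A0 m) \<subseteq> component n dn m v"
      unfolding component_def by auto
  qed
qed

lemma edges_eq:
  fixes v :: nat
  assumes m: "m \<in> pm (half_edges n dn)"
  defines "H0 \<equiv> half_edges n dn"
  defines "A0 \<equiv> {y \<in> H0. fst y = v}"
  shows "component_edges n dn m v = (\<lambda>h. {h, m h}) ` reach H0 A0 m"
proof -
  have mo: "matching_on H0 m" using m unfolding pm_def matching_on_def H0_def by auto
  have RH: "reach H0 A0 m \<subseteq> H0" by (rule reach_sub) (use mo in \<open>auto simp: A0_def\<close>)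
  have C: "component n dn m v = insert v (fst ` reach H0 A0 m)" using comp_eq[OF m] unfolding H0_def A0_def .
  show ?thesis
  proof
    show "component_edges n dn m v \<subseteq> (\<lambda>h. {h, m h}) ` reach H0 A0 m"
    proof
      fix e assume e: "e \<in> component_edges n dn m v"
      then have e1: "e \<in> cm_edges n dn m" and all: "\<forall>x\<in>e. fst x \<in> component n dn m v"
        unfolding component_edges_def by blast+
      from e1 obtain h where h12: "e = {h, m h}" "h \<in> H0"
        unfolding cm_edges_def H0_def by blast
      then have h: "e = {h, m h}" "h \<in> H0" "fst h \<in> component n dn m v" using all by auto
      have "h \<in> reach H0 A0 m"
      proof (cases "fst h = v")
        case True then show ?thesis using h by (auto simp: A0_def intro: rbase)
      next
        case False
        then obtain z where z: "z \<in> reach H0 A0 m" "fst h = fst z" using h(3) C by auto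
        then show ?thesis using h rvert[OF z(1), of h] by simp
      qed
      then show "e \<in> (\<lambda>h. {h, m h}) ` reach H0 A0 m" using h by auto
    qed
  next
    show "(\<lambda>h. {h, m h}) ` reach H0 A0 m \<subseteq> component_edges n dn m v"
    proof
      fix e assume "e \<in> (\<lambda>h. {h, m h}) ` reach H0 A0 m"
      then obtain h where h: "h \<in> reach H0 A0 m" "e = {h, m h}" by auto
      have mh: "m h \<in> reach H0 A0 m" using h(1) by (rule rstep)
      have "e \<in> cm_edges n dn m" unfolding cm_edges_def using h RH H0_def by blast
      moreover have "\<forall>x\<in>e. fst x \<in> component n dn m v" unfolding C using h mh by auto
      ultimately show "e \<in> component_edges n dn m v"
        unfolding component_edges_def by blast
    qed
  qed
qed

lemma card_pairs:
  assumes mo: "matching_on H m" and RH: "R \<subseteq> H" and cl: "\<And>h. h \<in> R \<Longrightarrow> m h \<in> R" and fin: "finite R"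
  shows "card R = 2 * card ((\<lambda>h. {h, m h}) ` R)"
proof -
  let ?E = "(\<lambda>h. {h, m h}) ` R"
  have U: "\<Union>?E = R"
  proof
    show "\<Union>?E \<subseteq> R" using cl by blast
    show "R \<subseteq> \<Union>?E" by blast
  qed
  have pw: "pairwise disjnt ?E"
  proof (rule pairwiseI)
    fix e e' assume e: "e \<in> ?E" and e': "e' \<in> ?E" and ne: "e \<noteq> e'"
    obtain h where h: "h \<in> R" "e = {h, m h}" using e by blast
    obtain h' where h': "h' \<in> R" "e' = {h', m h'}" using e' by blast
    have hH: "h \<in> H" "h' \<in> H" using h(1) h'(1) RH by blast+
    have inv: "m (m h) = h" "m (m h') = h'" using mo hH unfolding matching_on_def by blast+
    have "h \<noteq> h'" using ne h h' by blast
    moreover have "h \<noteq> m h'"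
    proof
      assume "h = m h'" then have "m h = h'" using inv by simp
      then have "e = e'" using h h' \<open>h = m h'\<close> by (simp add: insert_commute)
      then show False using ne by simp
    qed
    moreover have "m h \<noteq> h'"
    proof
      assume "m h = h'" then have "h = m h'" using inv by simp
      then have "e = e'" using h h' \<open>m h = h'\<close> by (simp add: insert_commute)
      then show False using ne by simp
    qed
    moreover have "m h \<noteq> m h'"
    proof
      assume "m h = m h'" then have "h = h'" using inv by metis
      then show False using \<open>h \<noteq> h'\<close> by simp
    qed
    ultimately show "disjnt e e'" unfolding disjnt_def h(2) h'(2) by blast
  qed
  have finE: "\<And>e. e \<in> ?E \<Longrightarrow> finite e" by blast
  have "card R = sum card ?E" using card_Union_disjoint[OF pw finE] U by simp
  also have "\<dots> = sum (\<lambda>_. 2) ?E"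
  proof (rule sum.cong[OF refl])
    fix e assume "e \<in> ?E"
    then obtain h where h: "h \<in> R" "e = {h, m h}" by blast
    have "h \<in> H" using h(1) RH by blast
    then have "m h \<noteq> h" using mo unfolding matching_on_def by blast
    then show "card e = 2" using h(2) by simp
  qed
  finally show ?thesis by simp
qed

lemma pm_nonempty: "even (\<Sum>i<n. dn i) \<Longrightarrow> pm (half_edges n dn) \<noteq> {}"
  using card_pm[OF half_edges_finite, of n dn] pmc_even_pos[of "card (half_edges n dn)"]
  by (auto simp: card_half_edges)

lemma super_start:
  fixes n dn and x g w Kmax :: real and kz db t :: nat and v :: nat
  defines "H0 \<equiv> half_edges n dn"
  defines "A0 \<equiv> {y \<in> H0. fst y = v}"
  assumes ev: "even (\<Sum>i<n. dn i)" and g: "g \<ge> 0" and w: "w \<ge> 0" and x: "0 < x" "x \<le> 1"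
    and top: "\<And>S. finite S \<Longrightarrow> card S \<le> kz \<Longrightarrow> real (card {y\<in>H0. fst y \<in> S}) \<le> Kmax"
    and cond: "g * Kmax / x^2 + w * (\<Sum>y\<in>H0. x ^ card {z\<in>H0. fst z = fst y}) / x^2
                 \<le> real (card H0) - Kmax - 1"
    and db: "1 + db \<le> kz"
  shows "(\<Sum>m\<in>pm H0. Zf g w t db H0 A0 m) \<le> real (card (pm H0))"
proof -
  have "(\<Sum>m\<in>pm H0. Zf g w t db H0 A0 m) \<le> x ^ card A0 * real (card (pm H0))"
  proof (rule Zf_super[where kz = kz and Kmax = Kmax and S = "{v}"])
    show "finite H0" unfolding H0_def by (rule half_edges_finite)
    show "even (card H0)" using ev unfolding H0_def card_half_edges .
    show "A0 \<subseteq> H0" unfolding A0_def by blast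
    show "vclosed H0 A0" unfolding vclosed_def A0_def by auto
    show "(H0 - H0) \<union> A0 \<subseteq> {y\<in>H0. fst y \<in> {v}}" unfolding A0_def by auto
    show "card {v} + db \<le> kz" using db by simp
  qed (use g w x top cond in auto)
  also have "\<dots> \<le> real (card (pm H0))"
    using x by (intro mult_left_le_one_le) (auto intro: power_le_one)
  finally show ?thesis .
qed

lemma count_edges:
  fixes n dn and x w Kmax :: real and kz L v :: nat
  defines "H0 \<equiv> half_edges n dn"
  assumes ev: "even (\<Sum>i<n. dn i)" and w: "w \<ge> 1" and x: "0 < x" "x \<le> 1"
    and top: "\<And>S. finite S \<Longrightarrow> card S \<le> kz \<Longrightarrow> real (card {y\<in>H0. fst y \<in> S}) \<le> Kmax"
    and cond: "w * Kmax / x^2 + w * (\<Sum>y\<in>H0. x ^ card {z\<in>H0. fst z = fst y}) / x^2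
                 \<le> real (card H0) - Kmax - 1"
    and L: "1 + 2 * L \<le> kz"
  shows "real (card {m \<in> pm H0. card (component_edges n dn m v) = L}) * w ^ L \<le> real (card (pm H0))"
proof -
  define A0 where "A0 = {y \<in> H0. fst y = v}"
  let ?Ev = "{m \<in> pm H0. card (component_edges n dn m v) = L}"
  have finpm: "finite (pm H0)" unfolding H0_def by (rule finite_pm[OF half_edges_finite])
  have Zval: "Zf w w L (2 * L) H0 A0 m = w ^ L" if m: "m \<in> ?Ev" for m
  proof -
    have mpm: "m \<in> pm H0" using m by blast
    have mo: "matching_on H0 m" using mpm unfolding pm_def matching_on_def by auto
    have AH: "A0 \<subseteq> H0" unfolding A0_def by blast
    let ?R = "reach H0 A0 m"
    have RH: "?R \<subseteq> H0" by (rule reach_sub[OF AH mo])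
    have finH0: "finite H0" unfolding H0_def by (rule half_edges_finite)
    have finR: "finite ?R" using RH finH0 by (rule finite_subset)
    have "card ?R = 2 * card ((\<lambda>h. {h, m h}) ` ?R)"
      by (rule card_pairs[OF mo RH _ finR]) (rule rstep)
    also have "(\<lambda>h. {h, m h}) ` ?R = component_edges n dn m v"
      using edges_eq[of m n dn v] mpm unfolding H0_def A0_def by simp
    finally have cR: "card ?R = 2 * L" using m by simp
    have "card (fst ` ?R - fst ` A0) \<le> card (fst ` ?R)" using finR by (intro card_mono) auto
    also have "\<dots> \<le> card ?R" using finR by (rule card_image_le)
    finally have V: "card (fst ` ?R - fst ` A0) \<le> 2 * L" using cR by simp
    have vc: "vclosed H0 A0" unfolding vclosed_def A0_def by auto
    have ev: "Zf w w L (2 * L) H0 A0 m = w ^ (card ?R div 2 - card (fst ` ?R - fst ` A0)) * w ^ card (fst ` ?R - fst ` A0)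
       \<and> even (card ?R) \<and> card (fst ` ?R - fst ` A0) \<le> card ?R div 2"
      by (rule Zf_eval[OF finH0 mo AH vc]) (use cR V in auto)
    then show ?thesis using cR by (simp add: power_add[symmetric])
  qed
  have "real (card ?Ev) * w ^ L = (\<Sum>m\<in>?Ev. Zf w w L (2 * L) H0 A0 m)"
    using Zval by simp
  also have "\<dots> \<le> (\<Sum>m\<in>pm H0. Zf w w L (2 * L) H0 A0 m)"
    by (rule sum_mono2[OF finpm]) (use w in \<open>auto intro: Zf_nonneg\<close>)
  also have "\<dots> \<le> real (card (pm H0))"
    unfolding A0_def H0_def
    by (rule super_start[where kz = kz and Kmax = Kmax]) (use ev w x top cond L in \<open>auto simp: H0_def\<close>)
  finally show ?thesis .
qed

lemma count_vertices:
  fixes n dn and x w Kmax :: real and kz k v :: nat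
  defines "H0 \<equiv> half_edges n dn"
  assumes ev: "even (\<Sum>i<n. dn i)" and w: "w \<ge> 1" and x: "0 < x" "x \<le> 1"
    and top: "\<And>S. finite S \<Longrightarrow> card S \<le> kz \<Longrightarrow> real (card {y\<in>H0. fst y \<in> S}) \<le> Kmax"
    and cond: "w * Kmax / x^2 + w * (\<Sum>y\<in>H0. x ^ card {z\<in>H0. fst z = fst y}) / x^2
                 \<le> real (card H0) - Kmax - 1"
    and k: "k \<le> kz" "2 \<le> k"
  shows "real (card {m \<in> pm H0. card (component n dn m v) = k}) * w ^ (k - 1) \<le> real (card (pm H0))"
proof -
  define A0 where "A0 = {y \<in> H0. fst y = v}"
  let ?Ev = "{m \<in> pm H0. card (component n dn m v) = k}"
  have finpm: "finite (pm H0)" unfolding H0_def by (rule finite_pm[OF half_edges_finite])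
  have finH0: "finite H0" unfolding H0_def by (rule half_edges_finite)
  have Zval: "Zf 1 w (card H0) (k - 1) H0 A0 m = w ^ (k - 1)" if m: "m \<in> ?Ev" for m
  proof -
    have mpm: "m \<in> pm H0" using m by blast
    have mo: "matching_on H0 m" using mpm unfolding pm_def matching_on_def by auto
    have AH: "A0 \<subseteq> H0" unfolding A0_def by blast
    let ?R = "reach H0 A0 m"
    have RH: "?R \<subseteq> H0" by (rule reach_sub[OF AH mo])
    have finR: "finite ?R" using RH finH0 by (rule finite_subset)
    have C: "component n dn m v = insert v (fst ` ?R)"
      using comp_eq[of m n dn v] mpm unfolding H0_def A0_def by simp
    have A0ne: "A0 \<noteq> {}"
    proof
      assume "A0 = {}"
      then have "?R = {}" by (simp add: reach_empty)
      then have "card (component n dn m v) = 1" unfolding C by simp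
      then show False using m k by simp
    qed
    then have fA0: "fst ` A0 = {v}" unfolding A0_def by auto
    have "v \<in> fst ` ?R" using fA0 A_sub_reach[of A0 H0 m] by blast
    then have C2: "component n dn m v = fst ` ?R" unfolding C by blast
    have V: "card (fst ` ?R - fst ` A0) = k - 1"
      unfolding fA0 using C2 m \<open>v \<in> fst ` ?R\<close> finR by (simp add: card_Diff_singleton)
    have cR: "card ?R \<le> 2 * card H0" using card_mono[OF finH0 RH] by simp
    have vc: "vclosed H0 A0" unfolding vclosed_def A0_def by auto
    have ev: "Zf 1 w (card H0) (k - 1) H0 A0 m = 1 ^ (card ?R div 2 - card (fst ` ?R - fst ` A0)) * w ^ card (fst ` ?R - fst ` A0)
       \<and> even (card ?R) \<and> card (fst ` ?R - fst ` A0) \<le> card ?R div 2"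
      by (rule Zf_eval[OF finH0 mo AH vc]) (use cR V in auto)
    then show ?thesis using V by simp
  qed
  have Kmax0: "Kmax \<ge> 0" using top[of "{}"] by simp
  have "real (card ?Ev) * w ^ (k - 1) = (\<Sum>m\<in>?Ev. Zf 1 w (card H0) (k - 1) H0 A0 m)"
    using Zval by simp
  also have "\<dots> \<le> (\<Sum>m\<in>pm H0. Zf 1 w (card H0) (k - 1) H0 A0 m)"
    by (rule sum_mono2[OF finpm]) (use w in \<open>auto intro: Zf_nonneg\<close>)
  also have "\<dots> \<le> real (card (pm H0))"
  proof -
    have "1 * Kmax / x^2 \<le> w * Kmax / x^2" using w Kmax0 x by (intro divide_right_mono mult_right_mono) auto
    then have cond1: "1 * Kmax / x^2 + w * (\<Sum>y\<in>H0. x ^ card {z\<in>H0. fst z = fst y}) / x^2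
                 \<le> real (card H0) - Kmax - 1" using cond by linarith
    show ?thesis
      unfolding A0_def H0_def
      by (rule super_start[where kz = kz and Kmax = Kmax]) (use ev w x top cond1 k in \<open>auto simp: H0_def\<close>)
  qed
  finally show ?thesis .
qed

lemma prob_edges:
  fixes n dn and x w Kmax :: real and kz L :: nat
  defines "H0 \<equiv> half_edges n dn"
  assumes n: "n \<ge> 1" and ev: "even (\<Sum>i<n. dn i)" and w: "w \<ge> 1" and x: "0 < x" "x \<le> 1"
    and top: "\<And>S. finite S \<Longrightarrow> card S \<le> kz \<Longrightarrow> real (card {y\<in>H0. fst y \<in> S}) \<le> Kmax"
    and cond: "w * Kmax / x^2 + w * (\<Sum>y\<in>H0. x ^ card {z\<in>H0. fst z = fst y}) / x^2
                 \<le> real (card H0) - Kmax - 1"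
    and L: "1 + 2 * L \<le> kz"
  shows "measure_pmf.prob (cm_with_vertex n dn) {(m, v). card (component_edges n dn m v) = L} \<le> (1 / w) ^ L"
proof -
  let ?M = "perfect_matchings n dn"
  have M: "?M = pm H0" unfolding H0_def by (rule perfect_matchings_pm)
  have ne: "?M \<noteq> {}" unfolding M H0_def by (rule pm_nonempty[OF ev])
  have fin: "finite ?M" unfolding M H0_def by (rule finite_pm[OF half_edges_finite])
  have cpos: "real (card ?M) > 0" using ne fin by (simp add: card_gt_0_iff)
  have wL: "w ^ L > 0" using w by simp
  have each: "real (card {m \<in> ?M. card (component_edges n dn m v) = L}) \<le> real (card ?M) / w ^ L" for v
  proof -
    have "real (card {m \<in> ?M. card (component_edges n dn m v) = L}) * w ^ L \<le> real (card ?M)"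
      unfolding M H0_def by (rule count_edges[where kz = kz and Kmax = Kmax and x = x]) (use ev w x top cond L in \<open>auto simp: H0_def\<close>)
    then show ?thesis using wL by (simp add: field_simps)
  qed
  have "measure_pmf.prob (cm_with_vertex n dn) {(m, v). card (component_edges n dn m v) = L}
      = (\<Sum>v<n. real (card {m \<in> ?M. card (component_edges n dn m v) = L})) / (real (card ?M) * real n)"
    by (rule prob_cm[OF ne fin n])
  also have "\<dots> \<le> (\<Sum>v<n. real (card ?M) / w ^ L) / (real (card ?M) * real n)"
    by (intro divide_right_mono sum_mono each) simp
  also have "\<dots> = (1 / w) ^ L" using cpos n by (simp add: field_simps power_one_over)
  finally show ?thesis .
qed

lemma prob_vertices:
  fixes n dn and x w Kmax :: real and kz k :: nat
  defines "H0 \<equiv> half_edges n dn"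
  assumes n: "n \<ge> 1" and ev: "even (\<Sum>i<n. dn i)" and w: "w \<ge> 1" and x: "0 < x" "x \<le> 1"
    and top: "\<And>S. finite S \<Longrightarrow> card S \<le> kz \<Longrightarrow> real (card {y\<in>H0. fst y \<in> S}) \<le> Kmax"
    and cond: "w * Kmax / x^2 + w * (\<Sum>y\<in>H0. x ^ card {z\<in>H0. fst z = fst y}) / x^2
                 \<le> real (card H0) - Kmax - 1"
    and k: "k \<le> kz" "2 \<le> k"
  shows "measure_pmf.prob (cm_with_vertex n dn) {(m, v). card (component n dn m v) = k} \<le> (1 / w) ^ (k - 1)"
proof -
  let ?M = "perfect_matchings n dn"
  have M: "?M = pm H0" unfolding H0_def by (rule perfect_matchings_pm)
  have ne: "?M \<noteq> {}" unfolding M H0_def by (rule pm_nonempty[OF ev])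
  have fin: "finite ?M" unfolding M H0_def by (rule finite_pm[OF half_edges_finite])
  have cpos: "real (card ?M) > 0" using ne fin by (simp add: card_gt_0_iff)
  have wL: "w ^ (k - 1) > 0" using w by simp
  have each: "real (card {m \<in> ?M. card (component n dn m v) = k}) \<le> real (card ?M) / w ^ (k - 1)" for v
  proof -
    have "real (card {m \<in> ?M. card (component n dn m v) = k}) * w ^ (k - 1) \<le> real (card ?M)"
      unfolding M H0_def by (rule count_vertices[where kz = kz and Kmax = Kmax and x = x]) (use ev w x top cond k in \<open>auto simp: H0_def\<close>)
    then show ?thesis using wL by (simp add: field_simps)
  qed
  have "measure_pmf.prob (cm_with_vertex n dn) {(m, v). card (component n dn m v) = k}
      = (\<Sum>v<n. real (card {m \<in> ?M. card (component n dn m v) = k})) / (real (card ?M) * real n)"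
    by (rule prob_cm[OF ne fin n])
  also have "\<dots> \<le> (\<Sum>v<n. real (card ?M) / w ^ (k - 1)) / (real (card ?M) * real n)"
    by (intro divide_right_mono sum_mono each) simp
  also have "\<dots> = (1 / w) ^ (k - 1)" using cpos n by (simp add: field_simps power_one_over)
  finally show ?thesis .
qed

lemma sigma_eq:
  fixes x :: real
  shows "(\<Sum>y\<in>half_edges n dn. x ^ card {z\<in>half_edges n dn. fst z = fst y}) = (\<Sum>i<n. real (dn i) * x ^ dn i)"
proof -
  have "(\<Sum>y\<in>half_edges n dn. x ^ card {z\<in>half_edges n dn. fst z = fst y})
      = (\<Sum>y\<in>Sigma {..<n} (\<lambda>i. {..<dn i}). x ^ card {z\<in>half_edges n dn. fst z = fst y})"
    by (simp add: half_edges_Sigma)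
  also have "\<dots> = (\<Sum>(i,j)\<in>Sigma {..<n} (\<lambda>i. {..<dn i}). x ^ card {z\<in>half_edges n dn. fst z = i})"
    by (simp add: case_prod_beta)
  also have "\<dots> = (\<Sum>i<n. \<Sum>j<dn i. x ^ card {z\<in>half_edges n dn. fst z = i})"
    by (rule sum.Sigma[symmetric]) auto
  also have "\<dots> = (\<Sum>i<n. real (dn i) * x ^ dn i)"
    by (rule sum.cong[OF refl]) (simp add: card_vertex_he1)
  finally show ?thesis .
qed

definition ndeg :: "nat \<Rightarrow> (nat \<Rightarrow> nat) \<Rightarrow> nat \<Rightarrow> nat" where
  "ndeg n dn j = card {i. i < n \<and> dn i = j}"

lemma group_deg:
  fixes f :: "nat \<Rightarrow> real" and dn :: "nat \<Rightarrow> nat" and T n :: nat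
  shows "(\<Sum>i\<in>{i. i < n \<and> dn i < T}. f (dn i)) = (\<Sum>j<T. f j * real (ndeg n dn j))"
proof -
  have in1: "(\<Sum>i\<in>{i\<in>{i. i < n \<and> dn i < T}. dn i = j}. f (dn i)) = f j * real (ndeg n dn j)" if "j < T" for j
  proof -
    have "{i\<in>{i. i < n \<and> dn i < T}. dn i = j} = {i. i < n \<and> dn i = j}" using that by auto
    then show ?thesis unfolding ndeg_def by simp
  qed
  have "(\<Sum>i\<in>{i. i < n \<and> dn i < T}. f (dn i)) = (\<Sum>j<T. \<Sum>i\<in>{i\<in>{i. i < n \<and> dn i < T}. dn i = j}. f (dn i))"
    by (rule sum.group[symmetric]) auto
  also have "\<dots> = (\<Sum>j<T. f j * real (ndeg n dn j))"
    by (rule sum.cong[OF refl], rule in1) simp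
  finally show ?thesis .
qed

definition tailsum :: "nat \<Rightarrow> (nat \<Rightarrow> nat) \<Rightarrow> nat \<Rightarrow> real" where
  "tailsum n dn T = (\<Sum>i\<in>{i. i < n \<and> T \<le> dn i}. real (dn i))"

lemma split_sum:
  fixes f :: "nat \<Rightarrow> real" and dn :: "nat \<Rightarrow> nat" and T n :: nat
  shows "(\<Sum>i<n. f i) = (\<Sum>i\<in>{i. i < n \<and> dn i < T}. f i) + (\<Sum>i\<in>{i. i < n \<and> T \<le> dn i}. f i)"
proof -
  have "{..<n} = {i. i < n \<and> dn i < T} \<union> {i. i < n \<and> T \<le> dn i}" by (auto simp: not_le)
  then have "(\<Sum>i<n. f i) = (\<Sum>i\<in>{i. i < n \<and> dn i < T} \<union> {i. i < n \<and> T \<le> dn i}. f i)" by simp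
  also have "\<dots> = (\<Sum>i\<in>{i. i < n \<and> dn i < T}. f i) + (\<Sum>i\<in>{i. i < n \<and> T \<le> dn i}. f i)"
    by (rule sum.union_disjoint) auto
  finally show ?thesis .
qed

lemma total_split:
  "(\<Sum>i<n. real (dn i)) = (\<Sum>j<T. real j * real (ndeg n dn j)) + tailsum n dn T"
  using split_sum[where f="\<lambda>i. real (dn i)" and n=n and dn=dn and T=T] group_deg[where f="\<lambda>j. real j" and n=n and dn=dn and T=T]
  unfolding tailsum_def by simp

lemma sigma_bound:
  fixes x :: real
  assumes "0 \<le> x" "x \<le> 1"
  shows "(\<Sum>i<n. real (dn i) * x ^ dn i) \<le> (\<Sum>j<T. real j * x ^ j * real (ndeg n dn j)) + tailsum n dn T"
proof -
  have "(\<Sum>i<n. real (dn i) * x ^ dn i) = (\<Sum>i\<in>{i. i < n \<and> dn i < T}. real (dn i) * x ^ dn i)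
        + (\<Sum>i\<in>{i. i < n \<and> T \<le> dn i}. real (dn i) * x ^ dn i)"
    by (rule split_sum)
  also have "(\<Sum>i\<in>{i. i < n \<and> dn i < T}. real (dn i) * x ^ dn i) = (\<Sum>j<T. real j * x ^ j * real (ndeg n dn j))"
    using group_deg[where f="\<lambda>j. real j * x ^ j" and n=n and dn=dn and T=T] by simp
  also have "(\<Sum>i\<in>{i. i < n \<and> T \<le> dn i}. real (dn i) * x ^ dn i) \<le> tailsum n dn T"
    unfolding tailsum_def
    by (rule sum_mono) (use assms in \<open>auto intro: mult_left_le power_le_one\<close>)
  finally show ?thesis by simp
qed

lemma top_bound:
  assumes "finite S"
  shows "real (card {y\<in>half_edges n dn. fst y \<in> S}) \<le> real (card S) * real T + tailsum n dn T"
proof -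
  have "real (card {y\<in>half_edges n dn. fst y \<in> S}) = (\<Sum>i\<in>S \<inter> {..<n}. real (dn i))"
    by (simp add: card_vertex_he)
  also have "\<dots> \<le> (\<Sum>i\<in>S \<inter> {..<n}. real T + (if T \<le> dn i then real (dn i) else 0))"
    by (rule sum_mono) auto
  also have "\<dots> = real (card (S \<inter> {..<n})) * real T + (\<Sum>i\<in>S \<inter> {..<n}. (if T \<le> dn i then real (dn i) else 0))"
    by (simp add: sum.distrib)
  also have "(\<Sum>i\<in>S \<inter> {..<n}. (if T \<le> dn i then real (dn i) else 0)) = (\<Sum>i\<in>{i. i < n \<and> T \<le> dn i} \<inter> S. real (dn i))"
    by (simp add: sum.inter_filter[symmetric] Int_commute) (rule sum.cong; auto)
  also have "\<dots> \<le> tailsum n dn T" unfolding tailsum_def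
    by (rule sum_mono2) auto
  also have "real (card (S \<inter> {..<n})) \<le> real (card S)" using assms by (simp add: card_mono)
  finally show ?thesis using assms by (simp add: mult_right_mono)
qed

lemma pmf_integrable_iff:
  fixes D :: "nat pmf" and f :: "nat \<Rightarrow> real"
  shows "integrable (measure_pmf D) f \<longleftrightarrow> summable (\<lambda>j. \<bar>pmf D j * f j\<bar>)"
proof -
  have "integrable (measure_pmf D) f \<longleftrightarrow> integrable (count_space UNIV) (\<lambda>j. pmf D j * f j)"
    unfolding measure_pmf_eq_density by (subst integrable_density) auto
  also have "\<dots> \<longleftrightarrow> summable (\<lambda>j. \<bar>pmf D j * f j\<bar>)"
    by (simp add: integrable_count_space_nat_iff)
  finally show ?thesis .
qed

lemma pmf_sums:
  fixes D :: "nat pmf" and f :: "nat \<Rightarrow> real"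
  assumes "integrable (measure_pmf D) f"
  shows "(\<lambda>j. pmf D j * f j) sums measure_pmf.expectation D f"
proof -
  have i: "integrable (count_space UNIV) (\<lambda>j. pmf D j * f j)"
    using assms unfolding measure_pmf_eq_density by (subst (asm) integrable_density) auto
  have "measure_pmf.expectation D f = (\<integral>j. pmf D j * f j \<partial>count_space UNIV)"
    unfolding measure_pmf_eq_density by (subst integral_density) auto
  then show ?thesis using sums_integral_count_space_nat[OF i] by simp
qed

lemma exists_T1:
  fixes D :: "nat pmf"
  assumes A5: "\<not> integrable (measure_pmf D) (\<lambda>k. real k * (real k - 2))
             \<or> measure_pmf.expectation D (\<lambda>k. real k * (real k - 2)) > 0"
  shows "\<exists>T1. (\<Sum>j<T1. pmf D j * (real j * (real j - 2))) > 0"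
proof (rule ccontr)
  assume neg: "\<not> ?thesis"
  then have le: "(\<Sum>j<T. pmf D j * (real j * (real j - 2))) \<le> 0" for T by (simp add: not_less)
  show False
  proof (cases "integrable (measure_pmf D) (\<lambda>k. real k * (real k - 2))")
    case True
    then have E: "measure_pmf.expectation D (\<lambda>k. real k * (real k - 2)) > 0" using A5 by blast
    have "(\<lambda>T. \<Sum>j<T. pmf D j * (real j * (real j - 2))) \<longlonglongrightarrow> measure_pmf.expectation D (\<lambda>k. real k * (real k - 2))"
      using pmf_sums[OF True] by (simp add: sums_def)
    then have "measure_pmf.expectation D (\<lambda>k. real k * (real k - 2)) \<le> 0"
      by (rule LIMSEQ_le_const2) (use le in auto)
    then show False using E by simp
  next
    case False
    then have ns: "\<not> summable (\<lambda>j. \<bar>pmf D j * (real j * (real j - 2))\<bar>)"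
      by (simp add: pmf_integrable_iff)
    have abs_eq: "\<bar>pmf D j * (real j * (real j - 2))\<bar> = pmf D j * (real j * (real j - 2)) + (if j = 1 then 2 * pmf D 1 else 0)" for j
    proof (cases "j = 1")
      case True then show ?thesis by simp
    next
      case False
      then have "real j * (real j - 2) \<ge> 0"
      proof (cases "j = 0")
        case False with \<open>j \<noteq> 1\<close> have "real j \<ge> 2" by linarith
        then show ?thesis by simp
      qed simp
      then have "pmf D j * (real j * (real j - 2)) \<ge> 0" by simp
      then show ?thesis using False by (simp only: abs_of_nonneg if_False)
    qed
    have "summable (\<lambda>j. \<bar>pmf D j * (real j * (real j - 2))\<bar>)"
    proof (rule summableI_nonneg_bounded[where x = "2 * pmf D 1"])
      fix T' :: nat
      have "(\<Sum>j<T'. \<bar>pmf D j * (real j * (real j - 2))\<bar>) = (\<Sum>j<T'. pmf D j * (real j * (real j - 2))) + (\<Sum>j<T'. (if j = 1 then 2 * pmf D 1 else 0))"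
        by (simp add: abs_eq sum.distrib)
      also have "(\<Sum>j<T'. (if j = 1 then 2 * pmf D 1 else 0)) \<le> 2 * pmf D 1"
        by (simp add: sum.delta)
      finally show "(\<Sum>j<T'. \<bar>pmf D j * (real j * (real j - 2))\<bar>) \<le> 2 * pmf D 1" using le[of T'] by linarith
    qed simp
    then show False using ns by simp
  qed
qed

lemma one_minus_pow_ge:
  fixes x :: real
  assumes "0 \<le> x" "x \<le> 1"
  shows "1 - x ^ k \<ge> (1 - x) * real k * x ^ k"
proof (induction k)
  case 0 then show ?case by simp
next
  case (Suc k)
  have "1 - x ^ Suc k = (1 - x ^ k) + x ^ k * (1 - x)" by (simp add: algebra_simps)
  also have "\<dots> \<ge> (1 - x) * real k * x ^ k + x ^ k * (1 - x)" using Suc by simp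
  finally have a: "1 - x ^ Suc k \<ge> (1 - x) * (real k + 1) * x ^ k" by (simp add: algebra_simps)
  have "x ^ Suc k \<le> x ^ k" using assms by (simp add: mult_left_le_one_le)
  then have "(1 - x) * (real k + 1) * x ^ Suc k \<le> (1 - x) * (real k + 1) * x ^ k"
    using assms by (intro mult_left_mono) auto
  moreover have "(1 - x) * real (Suc k) * x ^ Suc k = (1 - x) * (real k + 1) * x ^ Suc k" by simp
  ultimately show ?case using a by linarith
qed

lemma term_bound:
  fixes x :: real and j T1 :: nat
  assumes x: "0 < x" "x \<le> 1" and j: "j < T1"
  shows "real j * (x^2 - x ^ j) \<ge> (1 - x) * (real j * (real j - 2) - real T1 ^ 3 * (1 - x))"
proof (cases "j \<le> 2")
  case True
  then have "j = 0 \<or> j = 1 \<or> j = 2" by auto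
  then show ?thesis
  proof (elim disjE)
    assume "j = 1"
    have "(1 - x) * (- 1 - real T1 ^ 3 * (1 - x)) \<le> (1 - x) * (-1)"
      using x by (intro mult_left_mono) auto
    also have "\<dots> \<le> x^2 - x"
    proof -
      have h: "(1-x)*(1-x) \<ge> 0" by simp
      have "x^2 - x - (1-x)*(-1) = (1-x)*(1-x)" by (simp add: power2_eq_square algebra_simps)
      then show ?thesis using h by linarith
    qed
    finally show ?thesis using \<open>j = 1\<close> by simp
  next
    assume "j = 0" then show ?thesis using x by (simp add: mult_nonneg_nonneg)
  next
    assume "j = 2" then show ?thesis using x by (simp add: mult_nonneg_nonneg)
  qed
next
  case False
  define k where "k = j - 2"
  have jk: "j = k + 2" using False unfolding k_def by simp
  have "x^2 - x ^ j = x^2 * (1 - x ^ k)" unfolding jk by (simp add: power_add algebra_simps power2_eq_square)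
  also have "\<dots> \<ge> x^2 * ((1 - x) * real k * x ^ k)"
    using one_minus_pow_ge[of x k] x by (intro mult_left_mono) auto
  also have "x^2 * ((1 - x) * real k * x ^ k) = (1 - x) * real k * x ^ j"
    unfolding jk by (simp add: power_add power2_eq_square algebra_simps)
  finally have a: "x^2 - x ^ j \<ge> (1 - x) * real k * x ^ j" .
  have b0: "1 + real j * (x - 1) \<le> x ^ j"
    using Bernoulli_inequality[of "-(1 - x)" j] x by simp
  have "1 + real j * (x - 1) = 1 - real j * (1 - x)" by (simp add: algebra_simps)
  then have b: "x ^ j \<ge> 1 - real j * (1 - x)" using b0 by linarith
  have jT: "real j \<le> real T1" using j by simp
  have c: "real j * (1 - x) \<le> real T1 * (1 - x)" using jT x by (intro mult_right_mono) auto
  have kj: "real k \<le> real T1" using jk j by simp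
  have "real j * (x^2 - x ^ j) \<ge> real j * ((1 - x) * real k * x ^ j)"
    using a by (intro mult_left_mono) auto
  also have "real j * ((1 - x) * real k * x ^ j) \<ge> real j * ((1 - x) * real k * (1 - real T1 * (1 - x)))"
    using b c x by (intro mult_left_mono) auto
  finally have d: "real j * (x^2 - x ^ j) \<ge> (1 - x) * (real j * real k - real j * real k * real T1 * (1 - x))"
    by (simp add: algebra_simps)
  have "real j * real k * real T1 \<le> real T1 * real T1 * real T1"
    using jT kj by (intro mult_mono) auto
  then have "real j * real k * real T1 * (1 - x) \<le> real T1 ^ 3 * (1 - x)"
    using x by (intro mult_right_mono) (auto simp: power3_eq_cube)
  then have "(1 - x) * (real j * real k - real T1 ^ 3 * (1 - x)) \<le> (1 - x) * (real j * real k - real j * real k * real T1 * (1 - x))"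
    using x by (intro mult_left_mono) auto
  moreover have "real k = real j - 2" using jk by simp
  ultimately show ?thesis using d by simp
qed

lemma term_nonneg:
  fixes x :: real
  assumes "0 < x" "x \<le> 1" "2 \<le> j"
  shows "real j * (x^2 - x ^ j) \<ge> 0"
proof -
  have "x ^ j \<le> x ^ 2" using assms by (intro power_decreasing) auto
  then show ?thesis by simp
qed

lemma exists_xQ:
  fixes D :: "nat pmf"
  assumes T1: "(\<Sum>j<T1. pmf D j * (real j * (real j - 2))) > 0"
  shows "\<exists>x Q. 0 < x \<and> x < 1 \<and> Q > 0 \<and> (\<forall>T\<ge>T1. (\<Sum>j<T. pmf D j * real j * x ^ j) \<le> x^2 * (\<Sum>j<T. pmf D j * real j) - (1 - x) * Q)"
proof -
  define c0 where "c0 = (\<Sum>j<T1. pmf D j * (real j * (real j - 2)))"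
  have c0: "c0 > 0" using T1 unfolding c0_def .
  have T12: "T1 \<ge> 2"
  proof (rule ccontr)
    assume "\<not> T1 \<ge> 2"
    then have "T1 = 0 \<or> T1 = 1" by auto
    then show False using c0 unfolding c0_def by auto
  qed
  define \<eta> where "\<eta> = min (1/2) (c0 / (2 * (real T1 ^ 3 + 1)))"
  have "real T1 ^ 3 \<ge> 0" by simp
  then have d: "2 * (real T1 ^ 3 + 1) > 0" by (smt (verit))
  have "c0 / (2 * (real T1 ^ 3 + 1)) > 0" using c0 d by (rule divide_pos_pos)
  then have eta1: "\<eta> > 0" unfolding \<eta>_def by simp
  have eta2': "\<eta> \<le> 1/2" unfolding \<eta>_def by (rule min.cobounded1)
  note eta = eta1 eta2'
  have eta2: "real T1 ^ 3 * \<eta> \<le> c0 / 2"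
  proof -
    have "\<eta> \<le> c0 / (2 * (real T1 ^ 3 + 1))" unfolding \<eta>_def by simp
    then have e1: "\<eta> * (2 * (real T1 ^ 3 + 1)) \<le> c0" using d by (simp add: pos_le_divide_eq)
    have "\<eta> * (2 * (real T1 ^ 3 + 1)) = 2 * (real T1 ^ 3 * \<eta>) + 2 * \<eta>" by (simp add: algebra_simps)
    then show ?thesis using e1 eta by linarith
  qed
  define x where "x = 1 - \<eta>"
  have x: "0 < x" "x < 1" "x \<le> 1" unfolding x_def using eta by auto
  have psum: "(\<Sum>j<T1. pmf D j) \<le> 1"
    using measure_measure_pmf_finite[of "{..<T1}" D] measure_pmf.prob_le_1[of D "{..<T1}"] by simp
  have key: "(\<Sum>j<T. pmf D j * (real j * (x^2 - x ^ j))) \<ge> (1 - x) * (c0 / 2)" if T: "T \<ge> T1" for T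
  proof -
    have "(\<Sum>j<T1. pmf D j * (real j * (x^2 - x ^ j)))
        \<ge> (\<Sum>j<T1. pmf D j * ((1 - x) * (real j * (real j - 2) - real T1 ^ 3 * (1 - x))))"
      by (rule sum_mono, rule mult_left_mono[OF term_bound]) (use x in auto)
    also have "(\<Sum>j<T1. pmf D j * ((1 - x) * (real j * (real j - 2) - real T1 ^ 3 * (1 - x))))
        = (1 - x) * (c0 - real T1 ^ 3 * (1 - x) * (\<Sum>j<T1. pmf D j))"
    proof -
      have "(\<Sum>j<T1. pmf D j * ((1 - x) * (real j * (real j - 2) - real T1 ^ 3 * (1 - x))))
          = (\<Sum>j<T1. (1 - x) * (pmf D j * (real j * (real j - 2))) - ((1 - x) * real T1 ^ 3 * (1 - x)) * pmf D j)"
        by (rule sum.cong) (simp_all add: algebra_simps)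
      also have "\<dots> = (1 - x) * c0 - ((1 - x) * real T1 ^ 3 * (1 - x)) * (\<Sum>j<T1. pmf D j)"
        unfolding c0_def by (simp add: sum_subtractf sum_distrib_left)
      finally show ?thesis by (simp add: algebra_simps)
    qed
    also have "(1 - x) * (c0 - real T1 ^ 3 * (1 - x) * (\<Sum>j<T1. pmf D j)) \<ge> (1 - x) * (c0 / 2)"
    proof -
      have "real T1 ^ 3 * (1 - x) * (\<Sum>j<T1. pmf D j) \<le> real T1 ^ 3 * (1 - x) * 1"
        using psum x by (intro mult_left_mono) auto
      then have "real T1 ^ 3 * (1 - x) * (\<Sum>j<T1. pmf D j) \<le> c0 / 2" using eta2 unfolding x_def by simp
      then show ?thesis using x by (intro mult_left_mono) auto
    qed
    finally have lo: "(\<Sum>j<T1. pmf D j * (real j * (x^2 - x ^ j))) \<ge> (1 - x) * (c0 / 2)" .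
    have "(\<Sum>j<T. pmf D j * (real j * (x^2 - x ^ j))) = (\<Sum>j<T1. pmf D j * (real j * (x^2 - x ^ j)))
          + (\<Sum>j\<in>{T1..<T}. pmf D j * (real j * (x^2 - x ^ j)))"
    proof -
      have "{..<T} = {..<T1} \<union> {T1..<T}" using T by auto
      moreover have "(\<Sum>j\<in>{..<T1} \<union> {T1..<T}. pmf D j * (real j * (x^2 - x ^ j))) =
        (\<Sum>j<T1. pmf D j * (real j * (x^2 - x ^ j))) + (\<Sum>j\<in>{T1..<T}. pmf D j * (real j * (x^2 - x ^ j)))"
        by (rule sum.union_disjoint) auto
      ultimately show ?thesis by simp
    qed
    moreover have "(\<Sum>j\<in>{T1..<T}. pmf D j * (real j * (x^2 - x ^ j))) \<ge> 0"
      by (rule sum_nonneg, rule mult_nonneg_nonneg) (use x T12 term_nonneg in auto)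
    ultimately show ?thesis using lo by linarith
  qed
  show ?thesis
  proof (intro exI conjI allI impI)
    show "0 < x" "x < 1" "c0 / 2 > 0" using x c0 by auto
    fix T assume "T \<ge> T1"
    from key[OF this] show "(\<Sum>j<T. pmf D j * real j * x ^ j) \<le> x^2 * (\<Sum>j<T. pmf D j * real j) - (1 - x) * (c0 / 2)"
      by (simp add: algebra_simps sum_subtractf sum_distrib_left)
  qed
qed

lemma ev_ge_real: "eventually (\<lambda>n. real n \<ge> M) sequentially"
proof -
  have "\<forall>n\<ge>nat \<lceil>M\<rceil>. real n \<ge> M"
  proof (intro allI impI)
    fix n assume "n \<ge> nat \<lceil>M\<rceil>"
    then have "real n \<ge> real (nat \<lceil>M\<rceil>)" by simp
    moreover have "real (nat \<lceil>M\<rceil>) \<ge> M" by linarith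
    ultimately show "real n \<ge> M" by linarith
  qed
  then show ?thesis unfolding eventually_sequentially by blast
qed

lemma per_n_cond:
  fixes x \<delta> \<tau> \<mu> \<mu>T G \<epsilon> :: real and T n kz :: nat and dn :: "nat \<Rightarrow> nat"
  assumes x: "0 < x" "x \<le> 1" and \<delta>: "0 < \<delta>" "\<delta> \<le> \<mu>" and \<tau>def: "\<tau> = x^2 * \<delta> / 32"
    and \<epsilon>def: "\<epsilon> = \<tau> / (4 * real T)" and T: "T > 0"
    and GT: "G \<le> x^2 * \<mu> - x^2 * \<delta>" and \<mu>T: "\<mu> - \<mu>T \<le> \<tau>"
    and n: "n \<ge> 1"
    and e1: "(\<Sum>j<T. real j * x ^ j * real (ndeg n dn j)) \<le> real n * (G + \<tau>)"
    and e2: "(\<Sum>j<T. real j * real (ndeg n dn j)) \<ge> real n * (\<mu>T - \<tau>)"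
    and e3: "(\<Sum>i<n. real (dn i)) \<le> real n * (\<mu> + \<tau>)" "(\<Sum>i<n. real (dn i)) \<ge> real n * (\<mu> - \<tau>)"
    and e4: "1 \<le> \<tau> * real n" "2 * real T \<le> \<tau> * real n"
    and kz: "real kz \<le> 2 * \<epsilon> * real n + 1"
  defines "w \<equiv> (\<mu> - \<delta> / 4) / (\<mu> - 3 * \<delta> / 4)"
  shows "(\<forall>S. finite S \<longrightarrow> card S \<le> kz \<longrightarrow> real (card {y\<in>half_edges n dn. fst y \<in> S}) \<le> 4 * \<tau> * real n)
     \<and> w * (4 * \<tau> * real n) / x^2 + w * (\<Sum>y\<in>half_edges n dn. x ^ card {z\<in>half_edges n dn. fst z = fst y}) / x^2
        \<le> real (card (half_edges n dn)) - 4 * \<tau> * real n - 1"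
proof -
  have \<tau>pos: "\<tau> > 0" unfolding \<tau>def using x \<delta> by simp
  have rn: "real n \<ge> 1" using n by simp
  have tail: "tailsum n dn T \<le> 3 * \<tau> * real n"
  proof -
    have "tailsum n dn T = (\<Sum>i<n. real (dn i)) - (\<Sum>j<T. real j * real (ndeg n dn j))"
      using total_split[where n=n and dn=dn and T=T] by simp
    also have "\<dots> \<le> real n * (\<mu> + \<tau>) - real n * (\<mu>T - \<tau>)" using e2 e3 by linarith
    also have "\<dots> = real n * (\<mu> - \<mu>T + 2 * \<tau>)" by (simp add: algebra_simps)
    also have "\<dots> \<le> real n * (3 * \<tau>)" using \<mu>T by (intro mult_left_mono) auto
    finally show ?thesis by (simp add: algebra_simps)
  qed
  have top: "real (card {y\<in>half_edges n dn. fst y \<in> S}) \<le> 4 * \<tau> * real n"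
    if S: "finite S" "card S \<le> kz" for S
  proof -
    have "real (card {y\<in>half_edges n dn. fst y \<in> S}) \<le> real (card S) * real T + tailsum n dn T"
      by (rule top_bound[OF S(1)])
    also have "real (card S) * real T \<le> (2 * \<epsilon> * real n + 1) * real T"
      using S(2) kz by (intro mult_right_mono) auto
    also have "(2 * \<epsilon> * real n + 1) * real T = \<tau> * real n / 2 + real T"
      unfolding \<epsilon>def using T by (simp add: field_simps)
    finally show ?thesis using tail e4 by linarith
  qed
  have sig: "(\<Sum>y\<in>half_edges n dn. x ^ card {z\<in>half_edges n dn. fst z = fst y}) \<le> real n * (x^2 * \<mu> - x^2 * \<delta> + 4 * \<tau>)"
  proof -
    have "(\<Sum>y\<in>half_edges n dn. x ^ card {z\<in>half_edges n dn. fst z = fst y}) = (\<Sum>i<n. real (dn i) * x ^ dn i)"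
      by (rule sigma_eq)
    also have "\<dots> \<le> (\<Sum>j<T. real j * x ^ j * real (ndeg n dn j)) + tailsum n dn T"
      by (rule sigma_bound) (use x in auto)
    also have "\<dots> \<le> real n * (G + \<tau>) + 3 * \<tau> * real n" using e1 tail by linarith
    also have "\<dots> \<le> real n * (x^2 * \<mu> - x^2 * \<delta> + \<tau>) + 3 * \<tau> * real n"
      using GT rn by (intro add_right_mono mult_left_mono) auto
    finally show ?thesis by (simp add: algebra_simps)
  qed
  have den: "\<mu> - 3 * \<delta> / 4 > 0" using \<delta> by simp
  have wpos: "w > 0" unfolding w_def using \<delta> den by (intro divide_pos_pos) auto
  have x2: "x^2 > 0" "x^2 \<le> 1" using x by (auto simp: power_le_one)
  have "w * (4 * \<tau> * real n) / x^2 + w * (\<Sum>y\<in>half_edges n dn. x ^ card {z\<in>half_edges n dn. fst z = fst y}) / x^2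
      = w / x^2 * (4 * \<tau> * real n + (\<Sum>y\<in>half_edges n dn. x ^ card {z\<in>half_edges n dn. fst z = fst y}))"
    by (simp add: add_divide_distrib algebra_simps)
  also have "\<dots> \<le> w / x^2 * (real n * (x^2 * (\<mu> - 3 * \<delta> / 4)))"
  proof (rule mult_left_mono)
    have "4 * \<tau> * real n + real n * (x^2 * \<mu> - x^2 * \<delta> + 4 * \<tau>) = real n * (x^2 * \<mu> - x^2 * \<delta> + 8 * \<tau>)"
      by (simp add: algebra_simps)
    also have "x^2 * \<mu> - x^2 * \<delta> + 8 * \<tau> = x^2 * (\<mu> - 3 * \<delta> / 4)" unfolding \<tau>def by (simp add: algebra_simps)
    finally show "4 * \<tau> * real n + (\<Sum>y\<in>half_edges n dn. x ^ card {z\<in>half_edges n dn. fst z = fst y}) \<le> real n * (x^2 * (\<mu> - 3 * \<delta> / 4))"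
      using sig by linarith
    show "0 \<le> w / x^2" using wpos x2 by simp
  qed
  also have "\<dots> = real n * (\<mu> - \<delta> / 4)" unfolding w_def using den x2 by (simp add: field_simps)
  also have "\<dots> \<le> real n * (\<mu> - 6 * \<tau>)"
  proof (rule mult_left_mono)
    have "6 * \<tau> \<le> 6 * \<delta> / 32" unfolding \<tau>def using x2 \<delta> by (simp add: mult_left_le_one_le)
    then show "\<mu> - \<delta> / 4 \<le> \<mu> - 6 * \<tau>" using \<delta> by linarith
  qed simp
  also have "\<dots> \<le> real (card (half_edges n dn)) - 4 * \<tau> * real n - 1"
  proof -
    have "real (card (half_edges n dn)) = (\<Sum>i<n. real (dn i))" by (simp add: card_half_edges)
    then show ?thesis using e3(2) e4(1) by (simp add: algebra_simps)
  qed
  finally show ?thesis using top by blast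
qed

lemma main_cond:
  fixes d :: "nat \<Rightarrow> nat \<Rightarrow> nat" and D :: "nat pmf"
  assumes A1: "\<And>k. (\<lambda>n. real (card {i. i < n \<and> d n i = k}) / real n) \<longlonglongrightarrow> pmf D k"
    and A1_mean: "integrable (measure_pmf D) real"
    and A1_pos: "measure_pmf.expectation D real > 0"
    and A2: "(\<lambda>n. (\<Sum>i<n. real (d n i)) / real n) \<longlonglongrightarrow> measure_pmf.expectation D real"
    and A5: "\<not> integrable (measure_pmf D) (\<lambda>k. real k * (real k - 2))
             \<or> measure_pmf.expectation D (\<lambda>k. real k * (real k - 2)) > 0"
  shows "\<exists>x w \<epsilon> N. 0 < x \<and> x \<le> 1 \<and> w > 1 \<and> \<epsilon> > 0 \<and> (\<forall>n\<ge>N. n \<ge> 1 \<and> (\<forall>kz. real kz \<le> 2 * \<epsilon> * real n + 1 \<longrightarrow>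
      (\<exists>Kmax. (\<forall>S. finite S \<longrightarrow> card S \<le> kz \<longrightarrow> real (card {y\<in>half_edges n (d n). fst y \<in> S}) \<le> Kmax)
        \<and> w * Kmax / x^2 + w * (\<Sum>y\<in>half_edges n (d n). x ^ card {z\<in>half_edges n (d n). fst z = fst y}) / x^2
             \<le> real (card (half_edges n (d n))) - Kmax - 1)))"
proof -
  define \<mu> where "\<mu> = measure_pmf.expectation D real"
  have \<mu>pos: "\<mu> > 0" using A1_pos unfolding \<mu>_def .
  have sm: "(\<lambda>j. pmf D j * real j) sums \<mu>" unfolding \<mu>_def by (rule pmf_sums[OF A1_mean])
  define \<mu>T where "\<mu>T = (\<lambda>T. \<Sum>j<T. pmf D j * real j)"
  have \<mu>T_le: "\<mu>T T \<le> \<mu>" for T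
  proof -
    have "\<mu>T T \<le> suminf (\<lambda>j. pmf D j * real j)" unfolding \<mu>T_def
      by (rule sum_le_suminf) (use sm in \<open>auto simp: sums_iff\<close>)
    then show ?thesis using sm by (simp add: sums_iff)
  qed
  have \<mu>T_lim: "\<mu>T \<longlonglongrightarrow> \<mu>" using sm unfolding sums_def \<mu>T_def .
  obtain T1 where T1: "(\<Sum>j<T1. pmf D j * (real j * (real j - 2))) > 0" using exists_T1[OF A5] by blast
  obtain x Q where xQ: "0 < x" "x < 1" "Q > 0"
    and GQ: "\<And>T. T \<ge> T1 \<Longrightarrow> (\<Sum>j<T. pmf D j * real j * x ^ j) \<le> x^2 * (\<Sum>j<T. pmf D j * real j) - (1 - x) * Q"
    using exists_xQ[OF T1] by blast
  have x2: "x^2 > 0" "x^2 \<le> 1" using xQ by (auto simp: power_le_one)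
  define \<delta> where "\<delta> = (1 - x) * Q / x^2"
  have \<delta>pos: "\<delta> > 0" unfolding \<delta>_def using xQ x2 by simp
  have x2\<delta>: "x^2 * \<delta> = (1 - x) * Q" unfolding \<delta>_def using x2 by simp
  have G_le: "(\<Sum>j<T. pmf D j * real j * x ^ j) \<le> x^2 * \<mu> - x^2 * \<delta>" if "T \<ge> T1" for T
  proof -
    have "x^2 * \<mu>T T \<le> x^2 * \<mu>" using \<mu>T_le x2 by (intro mult_left_mono) auto
    then show ?thesis using GQ[OF that] x2\<delta> unfolding \<mu>T_def by linarith
  qed
  have \<delta>le: "\<delta> \<le> \<mu>"
  proof -
    have "0 \<le> (\<Sum>j<T1. pmf D j * real j * x ^ j)" using xQ by (intro sum_nonneg) auto
    then have "0 \<le> x^2 * (\<mu> - \<delta>)" using G_le[of T1] by (simp add: algebra_simps)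
    then show ?thesis using x2 by (simp add: zero_le_mult_iff)
  qed
  define \<tau> where "\<tau> = x^2 * \<delta> / 32"
  have \<tau>pos: "\<tau> > 0" unfolding \<tau>_def using x2 \<delta>pos by simp
  have "eventually (\<lambda>T. \<mu>T T > \<mu> - \<tau>) sequentially"
    using order_tendstoD(1)[OF \<mu>T_lim] \<tau>pos by simp
  then obtain T0 where T0: "\<And>T. T \<ge> T0 \<Longrightarrow> \<mu>T T > \<mu> - \<tau>" unfolding eventually_sequentially by blast
  define T where "T = max T1 (max T0 1)"
  have TT: "T \<ge> T1" "T \<ge> T0" "T > 0" unfolding T_def by auto
  define G where "G = (\<Sum>j<T. real j * x ^ j * pmf D j)"
  have GT: "G \<le> x^2 * \<mu> - x^2 * \<delta>" using G_le[OF TT(1)] unfolding G_def by (simp add: mult_ac)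
  have \<mu>TT: "\<mu> - \<mu>T T \<le> \<tau>" using T0[OF TT(2)] by simp
  define \<epsilon> where "\<epsilon> = \<tau> / (4 * real T)"
  have \<epsilon>pos: "\<epsilon> > 0" unfolding \<epsilon>_def using \<tau>pos TT by simp
  define w where "w = (\<mu> - \<delta> / 4) / (\<mu> - 3 * \<delta> / 4)"
  have den: "\<mu> - 3 * \<delta> / 4 > 0" using \<delta>le \<mu>pos by simp
  have w1: "w > 1" unfolding w_def using den \<delta>pos by (simp add: field_simps)
  define f1 where "f1 = (\<lambda>n. \<Sum>j<T. real j * x ^ j * (real (ndeg n (d n) j) / real n))"
  define f2 where "f2 = (\<lambda>n. \<Sum>j<T. real j * (real (ndeg n (d n) j) / real n))"
  have l1: "f1 \<longlonglongrightarrow> G" unfolding f1_def G_def ndeg_def by (intro tendsto_sum tendsto_mult_left A1)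
  have l2: "f2 \<longlonglongrightarrow> \<mu>T T" unfolding f2_def \<mu>T_def ndeg_def
  proof -
    have "(\<lambda>n. \<Sum>j<T. real j * (real (card {i. i < n \<and> d n i = j}) / real n)) \<longlonglongrightarrow> (\<Sum>j<T. real j * pmf D j)"
      by (intro tendsto_sum tendsto_mult_left A1)
    then show "(\<lambda>n. \<Sum>j<T. real j * (real (card {i. i < n \<and> d n i = j}) / real n)) \<longlonglongrightarrow> (\<Sum>j<T. pmf D j * real j)"
      by (simp add: mult.commute)
  qed
  have l3: "(\<lambda>n. (\<Sum>i<n. real (d n i)) / real n) \<longlonglongrightarrow> \<mu>" using A2 unfolding \<mu>_def .
  have ev: "eventually (\<lambda>n. f1 n < G + \<tau> \<and> f2 n > \<mu>T T - \<tau> \<and> (\<Sum>i<n. real (d n i)) / real n < \<mu> + \<tau>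
      \<and> (\<Sum>i<n. real (d n i)) / real n > \<mu> - \<tau> \<and> real n \<ge> 1 / \<tau> \<and> real n \<ge> 2 * real T / \<tau> \<and> real n \<ge> 1) sequentially"
  proof -
    have a1: "eventually (\<lambda>n. f1 n < G + \<tau>) sequentially" using order_tendstoD(2)[OF l1, of "G + \<tau>"] \<tau>pos by simp
    have a2: "eventually (\<lambda>n. f2 n > \<mu>T T - \<tau>) sequentially" using order_tendstoD(1)[OF l2, of "\<mu>T T - \<tau>"] \<tau>pos by simp
    have a3: "eventually (\<lambda>n. (\<Sum>i<n. real (d n i)) / real n < \<mu> + \<tau>) sequentially" using order_tendstoD(2)[OF l3, of "\<mu> + \<tau>"] \<tau>pos by simp
    have a4: "eventually (\<lambda>n. (\<Sum>i<n. real (d n i)) / real n > \<mu> - \<tau>) sequentially" using order_tendstoD(1)[OF l3, of "\<mu> - \<tau>"] \<tau>pos by simp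
    show ?thesis by (intro eventually_conj a1 a2 a3 a4 ev_ge_real)
  qed
  then obtain N where N: "\<And>n. n \<ge> N \<Longrightarrow> f1 n < G + \<tau> \<and> f2 n > \<mu>T T - \<tau> \<and> (\<Sum>i<n. real (d n i)) / real n < \<mu> + \<tau>
      \<and> (\<Sum>i<n. real (d n i)) / real n > \<mu> - \<tau> \<and> real n \<ge> 1 / \<tau> \<and> real n \<ge> 2 * real T / \<tau> \<and> real n \<ge> 1"
    unfolding eventually_sequentially by blast
  have main: "\<forall>n\<ge>N. n \<ge> 1 \<and> (\<forall>kz. real kz \<le> 2 * \<epsilon> * real n + 1 \<longrightarrow>
      (\<exists>Kmax. (\<forall>S. finite S \<longrightarrow> card S \<le> kz \<longrightarrow> real (card {y\<in>half_edges n (d n). fst y \<in> S}) \<le> Kmax)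
        \<and> w * Kmax / x^2 + w * (\<Sum>y\<in>half_edges n (d n). x ^ card {z\<in>half_edges n (d n). fst z = fst y}) / x^2
             \<le> real (card (half_edges n (d n))) - Kmax - 1))"
  proof (intro allI impI conjI)
    fix n assume n: "n \<ge> N"
    note Nn = N[OF n]
    have rn: "real n \<ge> 1" using Nn by simp
    then show "n \<ge> 1" by simp
    have rnpos: "real n > 0" using rn by simp
    fix kz assume kz: "real kz \<le> 2 * \<epsilon> * real n + 1"
    have e1: "(\<Sum>j<T. real j * x ^ j * real (ndeg n (d n) j)) \<le> real n * (G + \<tau>)"
    proof -
      have "f1 n = (\<Sum>j<T. real j * x ^ j * real (ndeg n (d n) j)) / real n"
        unfolding f1_def by (simp add: sum_divide_distrib)
      then have eq: "real n * f1 n = (\<Sum>j<T. real j * x ^ j * real (ndeg n (d n) j))" using rnpos by simp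
      have "real n * f1 n \<le> real n * (G + \<tau>)" using Nn rnpos by (intro mult_left_mono) auto
      then show ?thesis using eq by simp
    qed
    have e2: "(\<Sum>j<T. real j * real (ndeg n (d n) j)) \<ge> real n * (\<mu>T T - \<tau>)"
    proof -
      have "f2 n = (\<Sum>j<T. real j * real (ndeg n (d n) j)) / real n"
        unfolding f2_def by (simp add: sum_divide_distrib)
      then have eq: "real n * f2 n = (\<Sum>j<T. real j * real (ndeg n (d n) j))" using rnpos by simp
      have "real n * f2 n \<ge> real n * (\<mu>T T - \<tau>)" using Nn rnpos by (intro mult_left_mono) auto
      then show ?thesis using eq by simp
    qed
    have e3: "(\<Sum>i<n. real (d n i)) \<le> real n * (\<mu> + \<tau>)" "(\<Sum>i<n. real (d n i)) \<ge> real n * (\<mu> - \<tau>)"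
      using Nn rnpos by (simp_all add: field_simps)
    have e4: "1 \<le> \<tau> * real n" "2 * real T \<le> \<tau> * real n"
      using Nn \<tau>pos by (simp_all add: field_simps)
    have pc: "(\<forall>S. finite S \<longrightarrow> card S \<le> kz \<longrightarrow> real (card {y\<in>half_edges n (d n). fst y \<in> S}) \<le> 4 * \<tau> * real n)
     \<and> w * (4 * \<tau> * real n) / x^2 + w * (\<Sum>y\<in>half_edges n (d n). x ^ card {z\<in>half_edges n (d n). fst z = fst y}) / x^2
        \<le> real (card (half_edges n (d n))) - 4 * \<tau> * real n - 1"
      unfolding w_def
      by (rule per_n_cond[where \<mu>T = "\<mu>T T" and G = G and T = T and \<epsilon> = \<epsilon>])
         (use xQ \<delta>pos \<delta>le \<tau>_def \<epsilon>_def TT GT \<mu>TT rn e1 e2 e3 e4 kz in auto)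
    then show "\<exists>Kmax. (\<forall>S. finite S \<longrightarrow> card S \<le> kz \<longrightarrow> real (card {y\<in>half_edges n (d n). fst y \<in> S}) \<le> Kmax)
        \<and> w * Kmax / x^2 + w * (\<Sum>y\<in>half_edges n (d n). x ^ card {z\<in>half_edges n (d n). fst z = fst y}) / x^2
             \<le> real (card (half_edges n (d n))) - Kmax - 1" by blast
  qed
  have xx: "0 < x \<and> x \<le> 1 \<and> w > 1 \<and> \<epsilon> > 0" using xQ w1 \<epsilon>pos by auto
  show ?thesis using xx main by blast
qed

lemma one_le_mult_ge1: "(a::real) \<ge> 1 \<Longrightarrow> b \<ge> 1 \<Longrightarrow> 1 \<le> a * b"
  using mult_mono[of 1 a 1 b] by simp

lemma pow_exp: "w > 0 \<Longrightarrow> (1 / w) ^ L = exp (- ln w * real L)"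
proof -
  assume w: "w > 0"
  have "exp (- ln w * real L) = inverse (exp (real L * ln w))" by (simp add: exp_minus mult.commute)
  also have "exp (real L * ln w) = exp (ln w) ^ L" by (rule exp_of_nat_mult)
  also have "\<dots> = w ^ L" using w by simp
  finally show ?thesis by (simp add: power_one_over inverse_eq_divide)
qed

theorem lemma9p4:
  fixes d :: "nat \<Rightarrow> nat \<Rightarrow> nat" and D :: "nat pmf"
  assumes even_sum: "\<And>n. n \<ge> 1 \<Longrightarrow> even (\<Sum>i<n. d n i)"
    and A1: "\<And>k. (\<lambda>n. real (card {i. i < n \<and> d n i = k}) / real n) \<longlonglongrightarrow> pmf D k"
    and A1_mean: "integrable (measure_pmf D) real"
    and A1_pos: "measure_pmf.expectation D real > 0"
    and A2: "(\<lambda>n. (\<Sum>i<n. real (d n i)) / real n) \<longlonglongrightarrow> measure_pmf.expectation D real"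
    and A5: "\<not> integrable (measure_pmf D) (\<lambda>k. real k * (real k - 2))
             \<or> measure_pmf.expectation D (\<lambda>k. real k * (real k - 2)) > 0"
  shows "\<exists>c::real > 0. \<exists>\<epsilon>::real > 0. \<exists>C::real. \<forall>n \<ge> 1.
           (\<forall>l::nat. real l \<le> \<epsilon> * real n \<longrightarrow>
              measure_pmf.prob (cm_with_vertex n (d n))
                {(m, v). card (component_edges n (d n) m v) = l} \<le> C * exp (- c * real l))
         \<and> (\<forall>k::nat. 1 \<le> k \<and> real k \<le> \<epsilon> * real n \<longrightarrow>
              measure_pmf.prob (cm_with_vertex n (d n))
                {(m, v). card (component n (d n) m v) = k} \<le> C * exp (- c * real k))"
proof -
  obtain x w \<epsilon> N where x: "0 < x" "x \<le> 1" and w: "w > 1" and \<epsilon>: "\<epsilon> > 0"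
    and big: "\<And>n. n \<ge> N \<Longrightarrow> n \<ge> 1 \<and> (\<forall>kz. real kz \<le> 2 * \<epsilon> * real n + 1 \<longrightarrow>
      (\<exists>Kmax. (\<forall>S. finite S \<longrightarrow> card S \<le> kz \<longrightarrow> real (card {y\<in>half_edges n (d n). fst y \<in> S}) \<le> Kmax)
        \<and> w * Kmax / x^2 + w * (\<Sum>y\<in>half_edges n (d n). x ^ card {z\<in>half_edges n (d n). fst z = fst y}) / x^2
             \<le> real (card (half_edges n (d n))) - Kmax - 1))"
    using main_cond[OF A1 A1_mean A1_pos A2 A5] by blast
  define c where "c = ln w"
  have c: "c > 0" unfolding c_def using w by simp
  define C where "C = w * exp (c * (\<epsilon> * real N + 1))"
  have C1: "C \<ge> 1"
  proof -
    have "exp (c * (\<epsilon> * real N + 1)) \<ge> 1" using c \<epsilon> by simp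
    then show ?thesis unfolding C_def using w by (intro one_le_mult_ge1) auto
  qed
  have small: "1 \<le> C * exp (- c * real l)" if "real l \<le> \<epsilon> * real N + 1" for l :: nat
  proof -
    have "C * exp (- c * real l) = w * exp (c * (\<epsilon> * real N + 1 - real l))"
      unfolding C_def by (simp add: mult.assoc exp_add[symmetric] algebra_simps)
    moreover have "exp (c * (\<epsilon> * real N + 1 - real l)) \<ge> 1" using that c by simp
    ultimately show ?thesis using w one_le_mult_ge1[of w "exp (c * (\<epsilon> * real N + 1 - real l))"] by simp
  qed
  have wexp: "(1 / w) ^ L = exp (- c * real L)" for L using pow_exp[of w L] w unfolding c_def by simp
  have E: "measure_pmf.prob (cm_with_vertex n (d n)) {(m, v). card (component_edges n (d n) m v) = l} \<le> C * exp (- c * real l)"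
    if n: "n \<ge> 1" and l: "real l \<le> \<epsilon> * real n" for n l
  proof -
    let ?P = "measure_pmf.prob (cm_with_vertex n (d n)) {(m, v). card (component_edges n (d n) m v) = l}"
    show "?P \<le> C * exp (- c * real l)"
    proof (cases "n \<ge> N \<and> l \<ge> 1")
      case True
      obtain Kmax where top: "\<And>S. finite S \<Longrightarrow> card S \<le> 1 + 2 * l \<Longrightarrow> real (card {y\<in>half_edges n (d n). fst y \<in> S}) \<le> Kmax"
        and cond: "w * Kmax / x^2 + w * (\<Sum>y\<in>half_edges n (d n). x ^ card {z\<in>half_edges n (d n). fst z = fst y}) / x^2
             \<le> real (card (half_edges n (d n))) - Kmax - 1"
      proof -
        have kz: "real (1 + 2 * l) \<le> 2 * \<epsilon> * real n + 1" using l by simp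
        have "\<forall>kz. real kz \<le> 2 * \<epsilon> * real n + 1 \<longrightarrow>
          (\<exists>Kmax. (\<forall>S. finite S \<longrightarrow> card S \<le> kz \<longrightarrow> real (card {y\<in>half_edges n (d n). fst y \<in> S}) \<le> Kmax)
          \<and> w * Kmax / x^2 + w * (\<Sum>y\<in>half_edges n (d n). x ^ card {z\<in>half_edges n (d n). fst z = fst y}) / x^2
             \<le> real (card (half_edges n (d n))) - Kmax - 1)" using big[of n] True by blast
        then show ?thesis using kz that by blast
      qed
      have "?P \<le> (1 / w) ^ l"
        by (rule prob_edges[where kz = "1 + 2 * l" and Kmax = Kmax and x = x])
           (use n even_sum w x top cond in auto)
      also have "\<dots> = exp (- c * real l)" by (rule wexp)
      also have "\<dots> \<le> C * exp (- c * real l)" using C1 by simp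
      finally show ?thesis .
    next
      case False
      have "?P \<le> 1" by (rule measure_pmf.prob_le_1)
      also have "1 \<le> C * exp (- c * real l)"
      proof (cases "l = 0")
        case True then show ?thesis using C1 by simp
      next
        case False
        then have "n < N" using \<open>\<not> (n \<ge> N \<and> l \<ge> 1)\<close> by auto
        then have "\<epsilon> * real n \<le> \<epsilon> * real N" using \<epsilon> by simp
        then show ?thesis using l by (intro small) linarith
      qed
      finally show ?thesis .
    qed
  qed
  have V: "measure_pmf.prob (cm_with_vertex n (d n)) {(m, v). card (component n (d n) m v) = k} \<le> C * exp (- c * real k)"
    if n: "n \<ge> 1" and k: "1 \<le> k \<and> real k \<le> \<epsilon> * real n" for n k
  proof -
    let ?P = "measure_pmf.prob (cm_with_vertex n (d n)) {(m, v). card (component n (d n) m v) = k}"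
    show "?P \<le> C * exp (- c * real k)"
    proof (cases "n \<ge> N \<and> k \<ge> 2")
      case True
      obtain Kmax where top: "\<And>S. finite S \<Longrightarrow> card S \<le> k \<Longrightarrow> real (card {y\<in>half_edges n (d n). fst y \<in> S}) \<le> Kmax"
        and cond: "w * Kmax / x^2 + w * (\<Sum>y\<in>half_edges n (d n). x ^ card {z\<in>half_edges n (d n). fst z = fst y}) / x^2
             \<le> real (card (half_edges n (d n))) - Kmax - 1"
      proof -
        have "\<epsilon> * real n \<ge> 0" using \<epsilon> by simp
        then have kz: "real k \<le> 2 * \<epsilon> * real n + 1" using k by linarith
        have "\<forall>kz. real kz \<le> 2 * \<epsilon> * real n + 1 \<longrightarrow>
          (\<exists>Kmax. (\<forall>S. finite S \<longrightarrow> card S \<le> kz \<longrightarrow> real (card {y\<in>half_edges n (d n). fst y \<in> S}) \<le> Kmax)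
          \<and> w * Kmax / x^2 + w * (\<Sum>y\<in>half_edges n (d n). x ^ card {z\<in>half_edges n (d n). fst z = fst y}) / x^2
             \<le> real (card (half_edges n (d n))) - Kmax - 1)" using big[of n] True by blast
        then show ?thesis using kz that by blast
      qed
      have "?P \<le> (1 / w) ^ (k - 1)"
        by (rule prob_vertices[where kz = k and Kmax = Kmax and x = x])
           (use n even_sum w x top cond True in auto)
      also have "(1 / w) ^ (k - 1) = w * (1 / w) ^ k"
      proof -
        have "k = Suc (k - 1)" using True by simp
        then have "(1 / w) ^ k = (1 / w) * (1 / w) ^ (k - 1)" by (metis power_Suc)
        then show ?thesis using w by simp
      qed
      also have "\<dots> = w * exp (- c * real k)" by (simp add: wexp)
      also have "\<dots> \<le> C * exp (- c * real k)"
      proof -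
        have "w \<le> C" unfolding C_def using w c \<epsilon> by simp
        then show ?thesis by (intro mult_right_mono) auto
      qed
      finally show ?thesis .
    next
      case False
      have "?P \<le> 1" by (rule measure_pmf.prob_le_1)
      also have "1 \<le> C * exp (- c * real k)"
      proof (cases "k = 1")
        case True then show ?thesis using \<epsilon> by (intro small) simp
      next
        case False
        then have "n < N" using \<open>\<not> (n \<ge> N \<and> k \<ge> 2)\<close> k by auto
        then have "\<epsilon> * real n \<le> \<epsilon> * real N" using \<epsilon> by simp
        then show ?thesis using k by (intro small) linarith
      qed
      finally show ?thesis .
    qed
  qed
  have M: "\<forall>n \<ge> 1.
           (\<forall>l::nat. real l \<le> \<epsilon> * real n \<longrightarrow>
              measure_pmf.prob (cm_with_vertex n (d n))
                {(m, v). card (component_edges n (d n) m v) = l} \<le> C * exp (- c * real l))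
         \<and> (\<forall>k::nat. 1 \<le> k \<and> real k \<le> \<epsilon> * real n \<longrightarrow>
              measure_pmf.prob (cm_with_vertex n (d n))
                {(m, v). card (component n (d n) m v) = k} \<le> C * exp (- c * real k))"
  proof (intro allI impI conjI)
    fix n l :: nat assume "n \<ge> 1" "real l \<le> \<epsilon> * real n"
    then show "measure_pmf.prob (cm_with_vertex n (d n))
                {(m, v). card (component_edges n (d n) m v) = l} \<le> C * exp (- c * real l)" by (rule E)
  next
    fix n k :: nat assume "n \<ge> 1" "1 \<le> k \<and> real k \<le> \<epsilon> * real n"
    then show "measure_pmf.prob (cm_with_vertex n (d n))
                {(m, v). card (component n (d n) m v) = k} \<le> C * exp (- c * real k)" by (rule V)
  qed
  show ?thesis
    apply (rule exI[where x = c])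
    apply (rule conjI[OF c])
    apply (rule exI[where x = \<epsilon>])
    apply (rule conjI[OF \<epsilon>])
    apply (rule exI[where x = C])
    by (rule M)
qed

end
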